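(* Let $A\in\mathbb{R}^{n\times n}$ with $\rho(A)<1$, $C\in\mathbb{R}^{m\times n}$, and $Q\in\mathbb{R}^{n\times n}$, $R\in\mathbb{R}^{m\times m}$ symmetric positive definite, with $(A,C)$ observable and $(A,Q^{1/2})$ controllable. Let $\bar P$ be the unique stabilizing positive definite solution of $$\bar P = A\bar PA^{\intercal}+Q-(A\bar PA^{\intercal}+Q)C^{\intercal}\big(C(A\bar PA^{\intercal}+Q)C^{\intercal}+R\big)^{-1}C(A\bar PA^{\intercal}+Q),$$ let $P^{OP}=L(A,Q)$ and $P_n=P^{OP}+\bar P$. Let $0\le\bar\gamma<1$ and $0\le\gamma^e<1$. For $\mu\in(0,1)$: (i) let $(\lambda_k)_{k\ge1}$ be i.i.d. $\{0,1\}$-valued with $\mathbb{P}[\lambda_k=0]=\bar\gamma$, $(\lambda^e_k)_{k\ge1}$ i.i.d. $\{0,1\}$-valued with $\mathbb{P}[\lambda^e_k=0]=\gamma^e$, and $(u_k)_{k\ge1}$ i.i.d. $\{0,1\}$-valued with $\mathbb{P}[u_k=0]=\mu$, with $(u_k)$ independent of $(\lambda_k)$ and of $(\lambda^e_k)$; (ii) with fixed symmetric positive semidefinite $P_0,P^e_0$, define for $k\ge1$: $P_k=\bar P$ if $(\lambda_k,u_k)=(1,1)$ and $P_k=AP_{k-1}A^{\intercal}+Q$ otherwise; and $P^e_k=\bar P$ if $(\lambda^e_k,u_k)=(1,1)$, $P^e_k=P_n$ if $(\lambda^e_k,u_k)=(1,0)$, and $P^e_k=AP^e_{k-1}A^{\intercal}+Q$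 if $\lambda^e_k=0$; (iii) let $J(\mu)=\operatorname{tr}\lim_{k\to\infty}\mathbb{E}[P_k]$ and $J^e(\mu)=\operatorname{tr}\lim_{k\to\infty}\mathbb{E}[P^e_k]$. Let $W^e=L(\sqrt{\gamma^e}A,\bar P)$, $S^e=L(\sqrt{\gamma^e}A,Q)$, $H^e=L(\sqrt{\gamma^e}A,P_n)$ and $$\mu^{OP}=\frac{\gamma^e(\operatorname{tr}S^e-\operatorname{tr}W^e)+\operatorname{tr}W^e-\operatorname{tr}P^{OP}}{(\gamma^e-1)(\operatorname{tr}H^e-\operatorname{tr}W^e)}.$$ If $\mu\in(0,1)$ satisfies $\mu^{OP}<\mu<1$, then $J(\mu)<\operatorname{tr}P^{OP}$ and $\operatorname{tr}P^{OP}<J^e(\mu)$.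
   Context: For a square matrix $T$ with $\rho(T)<1$ and a symmetric matrix $U$, $L(T,U)$ denotes the unique solution $V$ of $V=TVT^{\intercal}+U$, equivalently $L(T,U)=\sum_{j=0}^{\infty}T^jU(T^{\intercal})^j$. Interpretation: a sensor transmits its steady-state Kalman estimate (error covariance $\bar P$) or, with probability $\mu$ (pseudo-random indicator $u_k=0$, known to the legitimate user but not the eavesdropper), independent noise with covariance $\bar P$; $P_k$ is the legitimate user's error covariance (dropout probability $\bar\gamma$), $P^e_k$ the eavesdropper's (dropout probability $\gamma^e$), and $P^{OP}$ the open-loop prediction error covariance. *)

theory Defs
  imports "HOL-Analysis.Analysis" "HOL-Probability.Probability"
begin

type_synonym 'n sqmat = "real^'n^'n"

definition mpow :: "real^'n^'n \<Rightarrow> nat \<Rightarrow> real^'n^'n" where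
  "mpow T j = ((\<lambda>X. T ** X) ^^ j) (mat 1)"

definition cmat :: "real^'n^'m \<Rightarrow> complex^'n^'m" where
  "cmat A = (\<chi> i j. complex_of_real (A $ i $ j))"

definition spectral_radius :: "real^'n^'n \<Rightarrow> real" where
  "spectral_radius A =
     Sup {cmod l | l. \<exists>v::complex^'n. v \<noteq> 0 \<and> cmat A *v v = l *s v}"

definition symmetric_mat :: "real^'n^'n \<Rightarrow> bool" where
  "symmetric_mat P \<longleftrightarrow> transpose P = P"

definition psd :: "real^'n^'n \<Rightarrow> bool" where
  "psd P \<longleftrightarrow> symmetric_mat P \<and> (\<forall>x. 0 \<le> x \<bullet> (P *v x))"

definition pd :: "real^'n^'n \<Rightarrow> bool" where
  "pd P \<longleftrightarrow> symmetric_mat P \<and> (\<forall>x. x \<noteq> 0 \<longrightarrow> 0 < x \<bullet> (P *v x))"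

definition msqrt :: "real^'n^'n \<Rightarrow> real^'n^'n" where
  "msqrt Q = (THE S. psd S \<and> S ** S = Q)"

text \<open>Observability of (A,C): the observability matrix [C; CA; ...; CA^(n-1)]
  has rank n, i.e. trivial kernel.\<close>
definition observable :: "real^'n^'n \<Rightarrow> real^'n^'m \<Rightarrow> bool" where
  "observable A C \<longleftrightarrow>
     (\<forall>x. (\<forall>k < CARD('n). C *v (mpow A k *v x) = 0) \<longrightarrow> x = 0)"

text \<open>Controllability of (A,B): the controllability matrix [B, AB, ..., A^(n-1) B]
  has rank n, i.e. no nonzero left null vector.\<close>
definition controllable :: "real^'n^'n \<Rightarrow> real^'k^'n \<Rightarrow> bool" where
  "controllable A B \<longleftrightarrow>
     (\<forall>y. (\<forall>k < CARD('n). y v* (mpow A k ** B) = 0) \<longrightarrow> y = 0)"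

definition Lyap :: "real^'n^'n \<Rightarrow> real^'n^'n \<Rightarrow> real^'n^'n" where
  "Lyap T U = (\<Sum>j. mpow T j ** U ** transpose (mpow T j))"

definition prior :: "real^'n^'n \<Rightarrow> real^'n^'n \<Rightarrow> real^'n^'n \<Rightarrow> real^'n^'n" where
  "prior A Q P = A ** P ** transpose A + Q"

definition kgain :: "real^'n^'n \<Rightarrow> real^'n^'m \<Rightarrow> real^'n^'n \<Rightarrow> real^'m^'m \<Rightarrow> real^'n^'n \<Rightarrow> real^'m^'n" where
  "kgain A C Q R P = prior A Q P ** transpose C **
      matrix_inv (C ** prior A Q P ** transpose C + R)"

definition riccati :: "real^'n^'n \<Rightarrow> real^'n^'m \<Rightarrow> real^'n^'n \<Rightarrow> real^'m^'m \<Rightarrow> real^'n^'n \<Rightarrow> real^'n^'n" where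
  "riccati A C Q R P = prior A Q P - prior A Q P ** transpose C **
      matrix_inv (C ** prior A Q P ** transpose C + R) ** C ** prior A Q P"

definition stabilizing :: "real^'n^'n \<Rightarrow> real^'n^'m \<Rightarrow> real^'n^'n \<Rightarrow> real^'m^'m \<Rightarrow> real^'n^'n \<Rightarrow> bool" where
  "stabilizing A C Q R P \<longleftrightarrow>
     spectral_radius ((mat 1 - kgain A C Q R P ** C) ** A) < 1"

primrec Pleg :: "real^'n^'n \<Rightarrow> real^'n^'n \<Rightarrow> real^'n^'n \<Rightarrow> real^'n^'n
    \<Rightarrow> (nat \<Rightarrow> 'a \<Rightarrow> nat) \<Rightarrow> (nat \<Rightarrow> 'a \<Rightarrow> nat) \<Rightarrow> nat \<Rightarrow> 'a \<Rightarrow> real^'n^'n" where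
  "Pleg A Q Pbar P0 lam u 0 \<omega> = P0"
| "Pleg A Q Pbar P0 lam u (Suc k) \<omega> =
     (if lam (Suc k) \<omega> = 1 \<and> u (Suc k) \<omega> = 1 then Pbar
      else A ** Pleg A Q Pbar P0 lam u k \<omega> ** transpose A + Q)"

primrec Peav :: "real^'n^'n \<Rightarrow> real^'n^'n \<Rightarrow> real^'n^'n \<Rightarrow> real^'n^'n \<Rightarrow> real^'n^'n
    \<Rightarrow> (nat \<Rightarrow> 'a \<Rightarrow> nat) \<Rightarrow> (nat \<Rightarrow> 'a \<Rightarrow> nat) \<Rightarrow> nat \<Rightarrow> 'a \<Rightarrow> real^'n^'n" where
  "Peav A Q Pbar Pn Pe0 lame u 0 \<omega> = Pe0"
| "Peav A Q Pbar Pn Pe0 lame u (Suc k) \<omega> =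
     (if lame (Suc k) \<omega> = 1 \<and> u (Suc k) \<omega> = 1 then Pbar
      else if lame (Suc k) \<omega> = 1 \<and> u (Suc k) \<omega> = 0 then Pn
      else A ** Peav A Q Pbar Pn Pe0 lame u k \<omega> ** transpose A + Q)"

end

theory Submission
  imports Defs "Jordan_Normal_Form.Spectral_Radius"
begin
hide_const (open) Matrix.mat Spectral_Radius.spectral_radius Matrix.vec
no_notation Matrix.vec_index (infixl "$" 100)
no_notation Matrix.scalar_prod (infix "\<bullet>" 70)

lemma vecI: "(\<And>i. x$i = y$i) \<Longrightarrow> x = y" by (simp add: Finite_Cartesian_Product.vec_eq_iff)

definition ix :: "nat \<Rightarrow> 'n::finite" where
  "ix = (SOME h. bij_betw h {0..<CARD('n)} (UNIV::'n set))"

lemma bij_ix: "bij_betw (ix :: nat \<Rightarrow> 'n::finite) {0..<CARD('n)} UNIV"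
proof -
  have "\<exists>h. bij_betw h {0..<CARD('n)} (UNIV::'n set)"
    using ex_bij_betw_nat_finite[of "UNIV::'n set"] by simp
  then show ?thesis unfolding ix_def by (rule someI_ex)
qed

definition ivx :: "'n::finite \<Rightarrow> nat" where "ivx i = inv_into {0..<CARD('n)} ix i"

lemma ivx_lt: "ivx (i::'n::finite) < CARD('n)"
proof -
  have "ix ` {0..<CARD('n)} = (UNIV::'n set)" using bij_ix[where 'n='n] by (simp add: bij_betw_def)
  then have "i \<in> ix ` {0..<CARD('n)}" by simp
  from inv_into_into[OF this] show ?thesis by (simp add: ivx_def)
qed

lemma ix_ivx: "ix (ivx (i::'n::finite)) = i"
proof -
  have "ix ` {0..<CARD('n)} = (UNIV::'n set)" using bij_ix[where 'n='n] by (simp add: bij_betw_def)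
  then have "i \<in> ix ` {0..<CARD('n)}" by simp
  from f_inv_into_f[OF this] show ?thesis by (simp add: ivx_def)
qed

lemma ivx_ix: "l < CARD('n::finite) \<Longrightarrow> ivx (ix l :: 'n) = l"
  using bij_ix[where 'n='n] unfolding ivx_def bij_betw_def by (simp add: inv_into_f_f)

definition tojnf :: "complex^'n^'n \<Rightarrow> complex mat" where
  "tojnf M = Matrix.mat CARD('n) CARD('n) (\<lambda>(i,j). M $ ix i $ ix j)"

lemma dim_tojnf[simp]: "dim_row (tojnf (M::complex^'n^'n)) = CARD('n)" "dim_col (tojnf M) = CARD('n)"
  by (simp_all add: tojnf_def)

lemma tojnf_carrier: "tojnf (M::complex^'n^'n) \<in> carrier_mat CARD('n) CARD('n)"
  by (simp add: tojnf_def)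

lemma sum_ix: "(\<Sum>l\<in>{0..<CARD('n)}. g ((ix l)::'n::finite)) = sum g UNIV"
  using sum.reindex_bij_betw[OF bij_ix, of g] by simp

lemma tojnf_mult: "tojnf ((M::complex^'n^'n) ** M') = tojnf M * tojnf M'"
proof (rule eq_matI)
  fix i j assume ij: "i < dim_row (tojnf M * tojnf M')" "j < dim_col (tojnf M * tojnf M')"
  then have i: "i < CARD('n)" and j: "j < CARD('n)" by (auto simp: tojnf_def)
  have "(tojnf M * tojnf M') $$ (i,j) = (\<Sum>l\<in>{0..<CARD('n)}. M $ ix i $ ix l * M' $ ix l $ ix j)"
    using i j by (simp add: tojnf_def scalar_prod_def)
  also have "\<dots> = (\<Sum>l\<in>UNIV. M $ ix i $ l * M' $ l $ ix j)"
    by (rule sum_ix)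
  finally show "tojnf (M ** M') $$ (i,j) = (tojnf M * tojnf M') $$ (i,j)"
    using i j by (simp add: tojnf_def matrix_matrix_mult_def)
qed (auto simp: tojnf_def)

lemma tojnf_one: "tojnf (mat 1 :: complex^'n^'n) = 1\<^sub>m CARD('n)"
proof (rule eq_matI)
  fix i j assume "i < dim_row (1\<^sub>m CARD('n))" "j < dim_col (1\<^sub>m CARD('n))"
  then have i: "i < CARD('n)" and j: "j < CARD('n)" by auto
  have "(ix i = (ix j :: 'n)) = (i = j)"
    using bij_ix[where 'n='n] i j unfolding bij_betw_def inj_on_def by auto
  then show "tojnf (mat 1 :: complex^'n^'n) $$ (i,j) = 1\<^sub>m CARD('n) $$ (i,j)"
    using i j by (simp add: tojnf_def Finite_Cartesian_Product.mat_def)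
qed (auto simp: tojnf_def)

lemma cmat_mult: "cmat (A ** B) = cmat A ** cmat B"
  by (simp add: cmat_def matrix_matrix_mult_def Finite_Cartesian_Product.vec_eq_iff)

lemma cmat_one: "cmat (mat 1) = mat 1"
  unfolding cmat_def Finite_Cartesian_Product.mat_def by (intro vecI) simp

lemma mpow_0[simp]: "mpow T 0 = mat 1" by (simp add: mpow_def)
lemma mpow_Suc: "mpow T (Suc k) = T ** mpow T k" by (simp add: mpow_def)
lemma mpow_Suc': "mpow T (Suc k) = mpow T k ** T"
  by (induction k) (simp_all add: mpow_Suc matrix_mul_assoc)

lemma mpow_scaleR: "mpow (c *\<^sub>R T) k = c ^ k *\<^sub>R mpow T k"
  by (induction k) (simp_all add: mpow_Suc matrix_scalar_ac scalar_matrix_assoc mult.commute)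

lemma tojnf_pow: "tojnf (cmat (mpow B k)) = tojnf (cmat B) ^\<^sub>m k"
proof (induction k)
  case 0 then show ?case by (simp add: cmat_one tojnf_one)
next
  case (Suc k) then show ?case by (simp add: mpow_Suc' cmat_mult tojnf_mult)
qed

lemma norm_mat_le: "norm (X::real^'n^'m) \<le> (\<Sum>i\<in>UNIV. \<Sum>j\<in>UNIV. \<bar>X$i$j\<bar>)"
proof -
  have "norm X \<le> (\<Sum>i\<in>UNIV. norm (X$i))"
    by (simp add: norm_vec_def L2_set_le_sum)
  also have "\<dots> \<le> (\<Sum>i\<in>UNIV. \<Sum>j\<in>UNIV. \<bar>X$i$j\<bar>)"
    by (intro sum_mono norm_le_l1_cart)
  finally show ?thesis .
qed

lemma eig_bound:
  fixes M :: "complex^'n^'n"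
  assumes v: "v \<noteq> 0" and ev: "M *v v = l *s v"
  shows "cmod l \<le> (\<Sum>i\<in>UNIV. \<Sum>j\<in>UNIV. cmod (M$i$j))"
proof -
  define m where "m = Max (range (\<lambda>j. cmod (v$j)))"
  have "m \<in> range (\<lambda>j. cmod (v$j))" unfolding m_def by (intro Max_in) auto
  then obtain i where mi: "m = cmod (v$i)" by auto
  have ge: "cmod (v$j) \<le> cmod (v$i)" for j
  proof -
    have "cmod (v$j) \<le> m" unfolding m_def by (rule Max_ge) auto
    then show ?thesis using mi by simp
  qed
  have vi: "v$i \<noteq> 0"
  proof
    assume "v$i = 0"
    then have "v$j = 0" for j using ge[of j] by simp
    then have "v = 0" by (intro vecI) simp
    then show False using v by simp
  qed
  have "cmod l * cmod (v$i) = cmod ((M *v v)$i)"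
    by (simp add: ev norm_mult)
  also have "\<dots> = cmod (\<Sum>j\<in>UNIV. M$i$j * v$j)"
    by (simp add: matrix_vector_mult_def)
  also have "\<dots> \<le> (\<Sum>j\<in>UNIV. cmod (M$i$j) * cmod (v$j))"
    by (rule order_trans[OF norm_sum]) (simp add: norm_mult)
  also have "\<dots> \<le> (\<Sum>j\<in>UNIV. cmod (M$i$j) * cmod (v$i))"
    by (intro sum_mono mult_left_mono ge) auto
  also have "\<dots> = (\<Sum>j\<in>UNIV. cmod (M$i$j)) * cmod (v$i)"
    by (simp add: sum_distrib_right)
  also have "\<dots> \<le> (\<Sum>i\<in>UNIV. \<Sum>j\<in>UNIV. cmod (M$i$j)) * cmod (v$i)"
    by (intro mult_right_mono member_le_sum) (auto intro: sum_nonneg)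
  finally show ?thesis using vi by simp
qed

lemma eig_le_sr:
  assumes v: "v \<noteq> 0" and ev: "cmat A *v v = l *s v"
  shows "cmod l \<le> spectral_radius A"
  unfolding Defs.spectral_radius_def
proof (rule cSup_upper)
  show "cmod l \<in> {cmod l |l. \<exists>v. v \<noteq> 0 \<and> cmat A *v v = l *s v}" using v ev by blast
  show "bdd_above {cmod l |l. \<exists>v. v \<noteq> 0 \<and> cmat A *v v = l *s v}"
  proof (rule bdd_aboveI)
    fix x assume "x \<in> {cmod l |l. \<exists>v. v \<noteq> 0 \<and> cmat A *v v = l *s v}"
    then obtain l' v' where "x = cmod l'" "v' \<noteq> 0" "cmat A *v v' = l' *s v'" by blast
    then show "x \<le> (\<Sum>i\<in>UNIV. \<Sum>j\<in>UNIV. cmod (cmat A$i$j))" using eig_bound by blast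
  qed
qed

lemma decay:
  fixes A :: "real^'n^'n"
  assumes sr: "spectral_radius A < 1"
  shows "\<exists>K r. 0 < r \<and> r < 1 \<and> (\<forall>k. norm (mpow A k) \<le> K * r^k)"
proof -
  define r where "r = (max 0 (spectral_radius A) + 1)/2"
  have r0: "0 < r" and r1: "r < 1" and rs: "spectral_radius A < r"
    using sr unfolding r_def by auto
  define B where "B = (1/r) *\<^sub>R A"
  define J where "J = tojnf (cmat B)"
  define N where "N = CARD('n)"
  have J: "J \<in> carrier_mat N N" unfolding J_def N_def by (rule tojnf_carrier)
  have N0: "N > 0" unfolding N_def by simp
  have srJ: "Spectral_Radius.spectral_radius J < 1"
  proof -
    from spectral_radius_mem_max(1)[OF J N0] obtain mu where
      mu: "mu \<in> spectrum J" and eq: "Spectral_Radius.spectral_radius J = norm mu" by auto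
    from mu obtain w where wc: "w \<in> carrier_vec N" and w0: "w \<noteq> 0\<^sub>v N"
      and ew: "J *\<^sub>v w = mu \<cdot>\<^sub>v w"
      unfolding spectrum_def eigenvalue_def eigenvector_def using J by auto
    define iv where "iv = (\<lambda>i::'n. ivx i)"
    have iv1: "iv i < N" and iv2: "ix (iv i) = i" for i
      unfolding iv_def N_def by (simp_all add: ivx_lt ix_ivx)
    have iv3: "l < N \<Longrightarrow> iv (ix l) = l" for l
      unfolding iv_def N_def by (simp add: ivx_ix)
    define v :: "complex^'n" where "v = (\<chi> i. vec_index w (iv i))"
    have vix: "l < N \<Longrightarrow> v $ ix l = vec_index w l" for l
      by (simp add: v_def iv3)
    have v0: "v \<noteq> 0"
    proof
      assume "v = 0"
      then have "vec_index w l = 0" if "l < N" for l using vix[OF that] by simp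
      then have "w = 0\<^sub>v N" using wc by (intro eq_vecI) auto
      then show False using w0 by simp
    qed
    have "cmat A *v v = (complex_of_real r * mu) *s v"
    proof (rule vecI)
      fix i :: 'n
      have dimw: "dim_vec w = N" using wc by simp
      have "vec_index (J *\<^sub>v w) (iv i) = vec_index (mu \<cdot>\<^sub>v w) (iv i)" using ew by simp
      then have "(\<Sum>l\<in>{0..<N}. cmat B $ i $ ix l * vec_index w l) = mu * vec_index w (iv i)"
        using iv1[of i] dimw J by (simp add: J_def tojnf_def scalar_prod_def iv2 N_def)
      moreover have "(\<Sum>l\<in>{0..<N}. cmat B $ i $ ix l * v $ ix l) = (\<Sum>l\<in>{0..<N}. cmat B $ i $ ix l * vec_index w l)"
        by (rule sum.cong) (simp_all add: vix)
      moreover have "v $ i = vec_index w (iv i)" by (simp add: v_def)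
      ultimately have "(\<Sum>l\<in>{0..<N}. cmat B $ i $ ix l * v $ ix l) = mu * v $ i"
        by simp
      then have "(\<Sum>j\<in>UNIV. cmat B $ i $ j * v $ j) = mu * v $ i"
        using sum_ix[where g="\<lambda>j. cmat B $ i $ j * v $ j"] by (simp add: N_def)
      then have "(\<Sum>j\<in>UNIV. complex_of_real (1/r) * (cmat A $ i $ j * v $ j)) = mu * v $ i"
        by (simp add: B_def cmat_def mult.assoc)
      then have "complex_of_real (1/r) * (\<Sum>j\<in>UNIV. cmat A $ i $ j * v $ j) = mu * v $ i"
        by (simp add: sum_distrib_left)
      then have "(\<Sum>j\<in>UNIV. cmat A $ i $ j * v $ j) = complex_of_real r * mu * v $ i"
        using r0 by (auto simp: field_simps)
      then show "(cmat A *v v) $ i = ((complex_of_real r * mu) *s v) $ i"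
        by (simp add: matrix_vector_mult_def)
    qed
    from eig_le_sr[OF v0 this] have "r * norm mu \<le> spectral_radius A"
      using r0 by (simp add: norm_mult)
    with rs have "r * norm mu < r * 1" by simp
    then have "norm mu < 1" using r0 by (simp only: mult_less_cancel_left_pos)
    then show ?thesis using eq by simp
  qed
  from spectral_radius_jnf_norm_bound_less_1_upper_triangular[OF J srJ]
  obtain c where c: "\<And>k. norm_bound (J ^\<^sub>m k) c" by auto
  have ent: "\<bar>mpow B k $ i $ j\<bar> \<le> c" for k i j
  proof -
    define iv where "iv = (\<lambda>i::'n. ivx i)"
    have iv1: "iv i < N" and iv2: "ix (iv i) = i" for i
      unfolding iv_def N_def by (simp_all add: ivx_lt ix_ivx)
    have "norm ((J ^\<^sub>m k) $$ (iv i, iv j)) \<le> c"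
      using c[of k] iv1[of i] iv1[of j] J unfolding norm_bound_def by auto
    moreover have "(J ^\<^sub>m k) $$ (iv i, iv j) = complex_of_real (mpow B k $ i $ j)"
      unfolding J_def tojnf_pow[symmetric] using iv1[of i] iv1[of j]
      by (simp add: tojnf_def iv2 cmat_def N_def)
    ultimately show ?thesis by simp
  qed
  have AB: "A = r *\<^sub>R B" using r0 by (simp add: B_def)
  show ?thesis
  proof (intro exI conjI allI)
    fix k
    have "norm (mpow A k) = r^k * norm (mpow B k)"
      using r0 by (simp add: AB mpow_scaleR)
    also have "\<dots> \<le> r^k * (real N * real N * c)"
    proof (rule mult_left_mono)
      have "norm (mpow B k) \<le> (\<Sum>i\<in>UNIV. \<Sum>j\<in>UNIV. \<bar>mpow B k $i$j\<bar>)" by (rule norm_mat_le)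
      also have "\<dots> \<le> (\<Sum>i\<in>(UNIV::'n set). \<Sum>j\<in>(UNIV::'n set). c)" by (intro sum_mono ent)
      finally show "norm (mpow B k) \<le> real N * real N * c" by (simp add: N_def)
    qed (use r0 in simp)
    finally show "norm (mpow A k) \<le> (real N * real N * c) * r^k" by (simp add: mult_ac)
  qed (use r0 r1 in auto)
qed




definition cmap :: "real^'n^'n \<Rightarrow> real^'n^'n \<Rightarrow> real^'n^'n" where
  "cmap T X = T ** X ** transpose T"

definition gdecay :: "real^'n^'n \<Rightarrow> bool" where
  "gdecay T \<longleftrightarrow> (\<exists>K r. 0 < r \<and> r < 1 \<and> (\<forall>k. norm (mpow T k) \<le> K * r^k))"

lemma Lyap_cmap: "Lyap T U = (\<Sum>j. cmap (mpow T j) U)"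
  by (simp add: Lyap_def cmap_def)

lemma mat_add_rdistrib: "((B::real^'k^'m) + C) ** A = B ** A + C ** A"
  by (simp add: matrix_matrix_mult_def Finite_Cartesian_Product.vec_eq_iff sum.distrib distrib_right)

lemma mat_diff_rdistrib: "((B::real^'k^'m) - C) ** A = B ** A - C ** A"
  by (simp add: matrix_matrix_mult_def Finite_Cartesian_Product.vec_eq_iff sum_subtractf left_diff_distrib)

lemma mat_diff_ldistrib: "(A::real^'k^'m) ** (B - C) = A ** B - A ** C"
  by (simp add: matrix_matrix_mult_def Finite_Cartesian_Product.vec_eq_iff sum_subtractf right_diff_distrib)

lemma linear_cmap: "linear (cmap T)"
  by (rule linearI) (simp_all add: cmap_def matrix_add_ldistrib mat_add_rdistrib
      matrix_scalar_ac scalar_matrix_assoc)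

lemma bl_cmap: "bounded_linear (cmap T)"
  using linear_cmap linear_conv_bounded_linear by blast

lemma cmap_add: "cmap T (X + Y) = cmap T X + cmap T Y"
  by (simp add: cmap_def matrix_add_ldistrib mat_add_rdistrib)

lemma cmap_scale: "cmap T (c *\<^sub>R X) = c *\<^sub>R cmap T X"
  by (simp add: cmap_def matrix_scalar_ac scalar_matrix_assoc)

lemma cmap_cmap: "cmap T (cmap S X) = cmap (T ** S) X"
  by (simp add: cmap_def matrix_transpose_mul matrix_mul_assoc)

lemma cmap_one[simp]: "cmap (mat 1) X = X"
  by (simp add: cmap_def)

lemma cmap_sum: "cmap T (\<Sum>j\<in>S. f j) = (\<Sum>j\<in>S. cmap T (f j))"
  using linear_cmap[of T] by (simp add: linear_sum)

lemma entry_cmap: "cmap T X $ i $ j = (\<Sum>m\<in>UNIV. (\<Sum>l\<in>UNIV. T$i$l * X$l$m) * T$j$m)"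
  by (simp add: cmap_def matrix_matrix_mult_def transpose_def)

lemma entry_le_norm: "\<bar>X$i$j\<bar> \<le> norm (X::real^'n^'m)"
  by (rule order_trans[OF component_le_norm_cart Finite_Cartesian_Product.norm_nth_le])

lemma norm_cmap: "norm (cmap T X) \<le> real CARD('n)^4 * (norm (T::real^'n^'n))^2 * norm X"
proof -
  have e: "\<bar>cmap T X $ i $ j\<bar> \<le> real CARD('n)^2 * (norm T^2 * norm X)" for i j
  proof -
    have "\<bar>cmap T X $ i $ j\<bar> \<le> (\<Sum>m\<in>UNIV. \<bar>(\<Sum>l\<in>UNIV. T$i$l * X$l$m) * T$j$m\<bar>)"
      unfolding entry_cmap by (rule sum_abs)
    also have "\<dots> \<le> (\<Sum>m\<in>(UNIV::'n set). \<Sum>l\<in>(UNIV::'n set). norm T^2 * norm X)"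
    proof (rule sum_mono)
      fix m
      have "\<bar>(\<Sum>l\<in>UNIV. T$i$l * X$l$m)\<bar> \<le> (\<Sum>l\<in>UNIV. \<bar>T$i$l * X$l$m\<bar>)"
        by (rule sum_abs)
      then have "\<bar>(\<Sum>l\<in>UNIV. T$i$l * X$l$m) * T$j$m\<bar> \<le> (\<Sum>l\<in>UNIV. \<bar>T$i$l * X$l$m\<bar>) * \<bar>T$j$m\<bar>"
        unfolding abs_mult[of _ "T$j$m"] by (rule mult_right_mono) simp
      also have "\<dots> = (\<Sum>l\<in>UNIV. \<bar>T$i$l\<bar> * \<bar>X$l$m\<bar> * \<bar>T$j$m\<bar>)"
        by (simp add: abs_mult sum_distrib_right)
      also have "\<dots> \<le> (\<Sum>l\<in>(UNIV::'n set). norm T * norm X * norm T)"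
        by (intro sum_mono mult_mono entry_le_norm) auto
      finally show "\<bar>(\<Sum>l\<in>UNIV. T$i$l * X$l$m) * T$j$m\<bar> \<le> (\<Sum>l\<in>(UNIV::'n set). norm T^2 * norm X)"
        by (simp add: power2_eq_square mult_ac)
    qed
    also have "\<dots> = real CARD('n)^2 * (norm T^2 * norm X)" by (simp add: power2_eq_square)
    finally show ?thesis .
  qed
  have "norm (cmap T X) \<le> (\<Sum>i\<in>UNIV. \<Sum>j\<in>UNIV. \<bar>cmap T X $i$j\<bar>)" by (rule norm_mat_le)
  also have "\<dots> \<le> (\<Sum>i\<in>(UNIV::'n set). \<Sum>j\<in>(UNIV::'n set). real CARD('n)^2 * (norm T^2 * norm X))"
    by (intro sum_mono e)
  also have "\<dots> = real CARD('n)^4 * (norm T)^2 * norm X" by (simp add: power2_eq_square power4_eq_xxxx)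
  finally show ?thesis .
qed

lemma gdecay_bound:
  fixes T :: "real^'n^'n"
  assumes "gdecay T"
  obtains K r where "0 < r" "r < 1" "\<And>k. norm (cmap (mpow T k) X) \<le> K * (r^2)^k"
proof -
  from assms obtain K r where r: "0 < r" "r < 1" and b: "\<And>k. norm (mpow T k) \<le> K * r^k"
    unfolding gdecay_def by blast
  have "norm (cmap (mpow T k) X) \<le> (real CARD('n)^4 * K^2 * norm X) * (r^2)^k" for k
  proof -
    have "(norm (mpow T k))^2 \<le> (K * r^k)^2"
      by (rule power_mono[OF b]) simp
    then have "norm (mpow T k)^2 \<le> K^2 * (r^2)^k" by (simp add: power_mult_distrib power_mult[symmetric] mult.commute)
    then have "real CARD('n)^4 * (norm (mpow T k))^2 * norm X \<le> real CARD('n)^4 * (K^2 * (r^2)^k) * norm X"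
      by (intro mult_right_mono mult_left_mono) auto
    with norm_cmap[of "mpow T k" X] show ?thesis by (simp add: mult_ac)
  qed
  then show ?thesis using that[of "r" "real CARD('n)^4 * K^2 * norm X"] r by auto
qed

lemma summable_cmap:
  assumes "gdecay T" shows "summable (\<lambda>j. cmap (mpow T j) X)"
proof -
  obtain K r where r: "0 < r" "r < 1" and b: "\<And>k. norm (cmap (mpow T k) X) \<le> K * (r^2)^k"
    using gdecay_bound[OF assms] by blast
  have "r * r < r * 1" using r by (intro mult_strict_left_mono) auto
  then have "r * r < 1" using r by linarith
  then have "r^2 < 1" by (simp add: power2_eq_square)
  then have "summable (\<lambda>k. (r^2)^k)" using r by (intro summable_geometric) simp
  then have "summable (\<lambda>k. K * (r^2)^k)" by (rule summable_mult)
  moreover have "\<exists>N. \<forall>n\<ge>N. norm (cmap (mpow T n) X) \<le> K * (r^2)^n" using b by blast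
  ultimately show ?thesis by (rule summable_comparison_test[rotated])
qed

lemma cmap_to0:
  assumes "gdecay T" shows "(\<lambda>k. cmap (mpow T k) X) \<longlonglongrightarrow> 0"
  using summable_LIMSEQ_zero[OF summable_cmap[OF assms]] .

lemma iterate:
  assumes "\<And>k. E (Suc k) = cmap T (E k) + U"
  shows "E k = cmap (mpow T k) (E 0) + (\<Sum>j<k. cmap (mpow T j) U)"
proof (induction k)
  case 0 then show ?case by simp
next
  case (Suc k)
  have "E (Suc k) = cmap T (E k) + U" by (rule assms)
  also have "\<dots> = cmap (mpow T (Suc k)) (E 0) + (\<Sum>j<k. cmap (mpow T (Suc j)) U) + U"
    by (simp add: Suc cmap_add cmap_sum cmap_cmap mpow_Suc)
  also have "\<dots> = cmap (mpow T (Suc k)) (E 0) + (\<Sum>j<Suc k. cmap (mpow T j) U)"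
    unfolding sum.lessThan_Suc_shift by (simp add: algebra_simps)
  finally show ?case .
qed

lemma Lyap_limit:
  assumes "gdecay T" "\<And>k. E (Suc k) = cmap T (E k) + U"
  shows "E \<longlonglongrightarrow> Lyap T U"
proof -
  have "(\<lambda>k. cmap (mpow T k) (E 0) + (\<Sum>j<k. cmap (mpow T j) U)) \<longlonglongrightarrow> 0 + Lyap T U"
    unfolding Lyap_cmap
    by (intro tendsto_add cmap_to0 summable_LIMSEQ summable_cmap assms(1))
  then have lim: "(\<lambda>k. cmap (mpow T k) (E 0) + (\<Sum>j<k. cmap (mpow T j) U)) \<longlonglongrightarrow> Lyap T U"
    by simp
  have eq: "E = (\<lambda>k. cmap (mpow T k) (E 0) + (\<Sum>j<k. cmap (mpow T j) U))"
    by (rule ext) (rule iterate[of E T U, OF assms(2)])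
  show ?thesis by (subst eq) (rule lim)
qed

lemma Lyap_unique:
  assumes "gdecay T" "X = cmap T X + U"
  shows "X = Lyap T U"
proof -
  have "(\<lambda>k. X) \<longlonglongrightarrow> Lyap T U" by (rule Lyap_limit[OF assms(1)]) (rule assms(2))
  then show ?thesis using LIMSEQ_const_iff by blast
qed

lemma Lyap_eq:
  assumes "gdecay T"
  shows "Lyap T U = cmap T (Lyap T U) + U"
proof -
  define S where "S = (\<lambda>k. \<Sum>j<k. cmap (mpow T j) U)"
  have S: "S \<longlonglongrightarrow> Lyap T U" unfolding S_def Lyap_cmap by (intro summable_LIMSEQ summable_cmap assms)
  have rec: "S (Suc k) = cmap T (S k) + U" for k
    unfolding S_def sum.lessThan_Suc_shift by (simp add: cmap_sum cmap_cmap mpow_Suc add.commute)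
  have "(\<lambda>k. S (Suc k)) \<longlonglongrightarrow> Lyap T U" using S by (rule LIMSEQ_Suc)
  moreover have "(\<lambda>k. S (Suc k)) \<longlonglongrightarrow> cmap T (Lyap T U) + U"
    unfolding rec by (intro tendsto_add tendsto_const bounded_linear.tendsto[OF bl_cmap] S)
  ultimately show ?thesis by (rule LIMSEQ_unique)
qed

lemma Lyap_add:
  assumes "gdecay T" shows "Lyap T (U + V) = Lyap T U + Lyap T V"
proof -
  have "cmap T (Lyap T U + Lyap T V) + (U + V) = (cmap T (Lyap T U) + U) + (cmap T (Lyap T V) + V)"
    by (simp add: cmap_add algebra_simps)
  also have "\<dots> = Lyap T U + Lyap T V" by (simp only: Lyap_eq[OF assms, symmetric])
  finally have "Lyap T U + Lyap T V = cmap T (Lyap T U + Lyap T V) + (U + V)" by simp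
  from Lyap_unique[OF assms this] show ?thesis by simp
qed

lemma Lyap_scale:
  assumes "gdecay T" shows "Lyap T (c *\<^sub>R U) = c *\<^sub>R Lyap T U"
proof -
  have "cmap T (c *\<^sub>R Lyap T U) + c *\<^sub>R U = c *\<^sub>R (cmap T (Lyap T U) + U)"
    by (simp add: cmap_scale scaleR_add_right)
  also have "\<dots> = c *\<^sub>R Lyap T U" by (simp only: Lyap_eq[OF assms, symmetric])
  finally have "c *\<^sub>R Lyap T U = cmap T (c *\<^sub>R Lyap T U) + c *\<^sub>R U" by simp
  from Lyap_unique[OF assms this] show ?thesis by simp
qed




definition nn :: "real^'n^'n \<Rightarrow> bool" where
  "nn X \<longleftrightarrow> (\<forall>x. 0 \<le> x \<bullet> (X *v x))"

lemma inner_mv: "x \<bullet> (S *v y) = (transpose S *v x) \<bullet> (y::real^'n)"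
proof -
  have "x \<bullet> (S *v y) = (x v* S) \<bullet> y" by (simp add: dot_lmul_matrix)
  also have "x v* S = transpose S *v x" by simp
  finally show ?thesis .
qed

lemma qf_congr:
  fixes S :: "real^'n^'m" and X :: "real^'n^'n"
  shows "x \<bullet> ((S ** X ** transpose S) *v x) = (transpose S *v x) \<bullet> (X *v (transpose S *v x))"
proof -
  have eq: "(S ** X ** transpose S) *v x = S *v (X *v (transpose S *v x))"
    by (simp only: matrix_vector_mul_assoc matrix_mul_assoc)
  show ?thesis unfolding eq using inner_mv[of x S "X *v (transpose S *v x)"] by simp
qed

lemma nn_congr: "nn X \<Longrightarrow> nn (S ** X ** transpose S)"
  unfolding nn_def by (simp add: qf_congr)

lemma nn_cmap: "nn X \<Longrightarrow> nn (cmap S X)"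
  unfolding cmap_def by (rule nn_congr)

lemma bl_qf: "bounded_linear (\<lambda>M::real^'n^'n. x \<bullet> (M *v x))"
proof -
  have "linear (\<lambda>M::real^'n^'n. x \<bullet> (M *v x))"
    by (rule linearI) (simp_all add: matrix_vector_mult_add_rdistrib inner_add_right
        scaleR_matrix_vector_assoc[symmetric])
  then show ?thesis using linear_conv_bounded_linear by blast
qed

lemma bl_trace: "bounded_linear (trace :: real^'n^'n \<Rightarrow> real)"
proof -
  have "linear (trace :: real^'n^'n \<Rightarrow> real)"
    by (rule linearI) (simp_all add: trace_def sum.distrib sum_distrib_left)
  then show ?thesis using linear_conv_bounded_linear by blast
qed

lemma diag_qf: "X $ i $ i = axis i 1 \<bullet> ((X::real^'n^'n) *v axis i 1)"
  by (simp add: matrix_vector_mult_basis inner_axis' column_def)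

lemma trace_qf: "trace (X::real^'n^'n) = (\<Sum>i\<in>UNIV. axis i 1 \<bullet> (X *v axis i 1))"
  by (simp add: trace_def diag_qf)

lemma nn_trace: "nn X \<Longrightarrow> 0 \<le> trace X"
  unfolding trace_qf nn_def by (intro sum_nonneg) auto

lemma nn_Lyap:
  fixes T :: "real^'n^'n"
  assumes "gdecay T" "nn Y" shows "nn (Lyap T Y)"
  unfolding nn_def
proof
  fix x :: "real^'n"
  have s: "summable (\<lambda>j. cmap (mpow T j) Y)" by (rule summable_cmap[OF assms(1)])
  have "x \<bullet> (Lyap T Y *v x) = (\<Sum>j. x \<bullet> (cmap (mpow T j) Y *v x))"
    unfolding Lyap_cmap by (rule bounded_linear.suminf[OF bl_qf s])
  also have "\<dots> \<ge> 0"
    using nn_cmap[OF assms(2)] unfolding nn_def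
    by (intro suminf_nonneg bounded_linear.summable[OF bl_qf s]) auto
  finally show "0 \<le> x \<bullet> (Lyap T Y *v x)" .
qed

lemma trace_Lyap_ge:
  assumes "gdecay T" "nn Y" shows "trace Y \<le> trace (Lyap T Y)"
proof -
  have s: "summable (\<lambda>j. cmap (mpow T j) Y)" by (rule summable_cmap[OF assms(1)])
  have "trace (Lyap T Y) = (\<Sum>j. trace (cmap (mpow T j) Y))"
    unfolding Lyap_cmap by (rule bounded_linear.suminf[OF bl_trace s])
  moreover have "(\<Sum>j\<in>{0}. trace (cmap (mpow T j) Y)) \<le> (\<Sum>j. trace (cmap (mpow T j) Y))"
    using nn_trace[OF nn_cmap[OF assms(2)]]
    by (intro sum_le_suminf bounded_linear.summable[OF bl_trace s]) auto
  ultimately show ?thesis by simp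
qed

lemma pd_nn: "pd P \<Longrightarrow> nn P"
  unfolding pd_def nn_def by (metis inner_zero_left order_refl less_imp_le)

lemma psd_nn: "psd P \<Longrightarrow> nn P"
  unfolding psd_def nn_def by blast

lemma pd_trace: "pd P \<Longrightarrow> 0 < trace P"
  unfolding trace_qf pd_def
  by (intro sum_pos) (auto simp: axis_eq_0_iff)

lemma nn_add: "nn X \<Longrightarrow> nn Y \<Longrightarrow> nn (X + Y)"
  unfolding nn_def by (simp add: matrix_vector_mult_add_rdistrib inner_add_right add_nonneg_nonneg)

lemma invertible_inv: "invertible K \<Longrightarrow> K ** matrix_inv K = mat 1 \<and> matrix_inv K ** K = mat 1"
  unfolding invertible_def matrix_inv_def by (rule someI_ex)

lemma transpose_add: "transpose (X + Y) = transpose X + transpose (Y::real^'n^'m)"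
  by (simp add: transpose_def Finite_Cartesian_Product.vec_eq_iff)

lemma transpose_diff: "transpose (X - Y) = transpose X - transpose (Y::real^'n^'m)"
  by (simp add: transpose_def Finite_Cartesian_Product.vec_eq_iff)

lemma cmap_diff: "cmap T (X - Y) = cmap T X - cmap T Y"
  by (simp add: cmap_def mat_diff_ldistrib mat_diff_rdistrib)




lemma observable_C_nz:
  assumes "observable A (C::real^'n^'m)" shows "C \<noteq> 0"
proof
  assume C: "C = 0"
  obtain i :: 'n where True by simp
  have "axis i (1::real) = 0" using assms C unfolding observable_def by simp
  then show False by (simp add: axis_eq_0_iff)
qed

lemma riccati_gap:
  fixes A :: "real^'n^'n" and C :: "real^'n^'m" and R :: "real^'m^'m"
  assumes hA: "gdecay A" and hQ: "pd Q" and hR: "pd R" and hobs: "observable A C"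
    and hP: "pd P" and hric: "P = riccati A C Q R P"
  shows "Lyap A Q - P = Lyap A (prior A Q P - P) \<and> nn (prior A Q P - P) \<and> 0 < trace (prior A Q P - P)"
proof -
  define F where "F = prior A Q P"
  define K where "K = C ** F ** transpose C + R"
  define S where "S = matrix_inv K"
  define M where "M = F ** transpose C"
  have Ps: "transpose P = P" using hP unfolding pd_def symmetric_mat_def by simp
  have Qs: "transpose Q = Q" using hQ unfolding pd_def symmetric_mat_def by simp
  have Fs: "transpose F = F"
    unfolding F_def prior_def by (simp add: transpose_add matrix_transpose_mul Ps Qs matrix_mul_assoc)
  have Fpos: "0 < x \<bullet> (F *v x)" if "x \<noteq> 0" for x
  proof -
    have "0 \<le> x \<bullet> ((A ** P ** transpose A) *v x)" using nn_congr[OF pd_nn[OF hP]] unfolding nn_def by blast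
    moreover have "0 < x \<bullet> (Q *v x)" using hQ that unfolding pd_def by blast
    ultimately show ?thesis unfolding F_def prior_def
      by (simp add: matrix_vector_mult_add_rdistrib inner_add_right)
  qed
  have Fnn: "nn F" unfolding nn_def
  proof
    fix x show "0 \<le> x \<bullet> (F *v x)" using Fpos[of x] by (cases "x = 0") auto
  qed
  have Kpos: "0 < x \<bullet> (K *v x)" if "x \<noteq> 0" for x
  proof -
    have "0 \<le> x \<bullet> ((C ** F ** transpose C) *v x)" using nn_congr[OF Fnn] unfolding nn_def by blast
    moreover have "0 < x \<bullet> (R *v x)" using hR that unfolding pd_def by blast
    ultimately show ?thesis unfolding K_def
      by (simp add: matrix_vector_mult_add_rdistrib inner_add_right)
  qed
  have "\<forall>x. K *v x = 0 \<longrightarrow> x = 0"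
  proof (intro allI impI)
    fix x assume "K *v x = 0"
    then have "x \<bullet> (K *v x) = 0" by simp
    then show "x = 0" using Kpos[of x] by (cases "x = 0") auto
  qed
  then have "invertible K" using invertible_left_inverse matrix_left_invertible_ker by blast
  then have KS: "K ** S = mat 1" unfolding S_def using invertible_inv by blast
  have Spos: "0 < y \<bullet> (S *v y)" if "y \<noteq> 0" for y
  proof -
    define z where "z = S *v y"
    have Kz: "K *v z = y" unfolding z_def by (simp add: matrix_vector_mul_assoc KS)
    have "z \<noteq> 0" using Kz that by auto
    then have "0 < z \<bullet> (K *v z)" by (rule Kpos)
    also have "z \<bullet> (K *v z) = y \<bullet> (S *v y)" using Kz by (simp add: z_def inner_commute)
    finally show ?thesis .
  qed
  have Snn: "nn S" unfolding nn_def
  proof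
    fix x show "0 \<le> x \<bullet> (S *v x)" using Spos[of x] by (cases "x = 0") auto
  qed
  have ric: "P = F - F ** transpose C ** S ** C ** F"
    using hric unfolding riccati_def F_def K_def S_def prior_def by simp
  have tM: "transpose M = C ** F" unfolding M_def by (simp add: matrix_transpose_mul Fs)
  have G: "F - P = M ** S ** transpose M"
  proof -
    have "F - P = F ** transpose C ** S ** C ** F" using ric by simp
    also have "\<dots> = M ** S ** transpose M" unfolding tM unfolding M_def by (simp add: matrix_mul_assoc)
    finally show ?thesis .
  qed
  have Gnn: "nn (F - P)" unfolding G by (rule nn_congr[OF Snn])
  have CF: "C ** F \<noteq> 0"
  proof
    assume CF0: "C ** F = 0"
    have "C $ a = 0" for a
    proof -
      have "F *v (C $ a) = (C $ a) v* F"
        using transpose_matrix_vector[of F "C $ a"] Fs by simp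
      also have "\<dots> = (C ** F) $ a"
        by (simp add: vector_matrix_mult_def matrix_matrix_mult_def Finite_Cartesian_Product.vec_eq_iff mult.commute)
      finally have "F *v (C $ a) = (C ** F) $ a" .
      then have "F *v (C $ a) = 0" using CF0 by simp
      then have "(C $ a) \<bullet> (F *v (C $ a)) = 0" by simp
      then show ?thesis using Fpos[of "C $ a"] by (cases "C $ a = 0") auto
    qed
    then have "C = 0" by (simp add: Finite_Cartesian_Product.vec_eq_iff)
    with observable_C_nz[OF hobs] show False by simp
  qed
  obtain i where i: "transpose M *v axis i 1 \<noteq> 0"
  proof -
    have "\<exists>i. transpose M *v axis i 1 \<noteq> 0"
    proof (rule ccontr)
      assume "\<not> (\<exists>i. transpose M *v axis i 1 \<noteq> 0)"
      then have "column i (transpose M) = 0" for i by (simp add: matrix_vector_mult_basis)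
      then have "transpose M = 0"
        by (simp add: Finite_Cartesian_Product.vec_eq_iff column_def)
      with tM CF show False by simp
    qed
    then show ?thesis using that by blast
  qed
  have "trace (F - P) = (\<Sum>j\<in>UNIV. (transpose M *v axis j 1) \<bullet> (S *v (transpose M *v axis j 1)))"
    unfolding trace_qf G by (simp only: qf_congr)
  also have "\<dots> > 0"
    using Spos[OF i] Snn unfolding nn_def by (intro sum_pos2[of _ i]) auto
  finally have Gtr: "0 < trace (F - P)" .
  have POP: "Lyap A Q = cmap A (Lyap A Q) + Q" by (rule Lyap_eq[OF hA])
  have "Lyap A Q - P = cmap A (Lyap A Q - P) + (F - P)"
  proof -
    have "cmap A (Lyap A Q - P) + (F - P) = cmap A (Lyap A Q) - cmap A P + F - P"
      by (simp add: cmap_diff)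
    also have "\<dots> = cmap A (Lyap A Q) + Q - P" unfolding F_def prior_def cmap_def by simp
    also have "\<dots> = Lyap A Q - P" using POP by simp
    finally show ?thesis by simp
  qed
  then have "Lyap A Q - P = Lyap A (F - P)" by (rule Lyap_unique[OF hA])
  then show ?thesis using Gnn Gtr unfolding F_def by simp
qed




lemma tr_add: "trace (X + Y) = trace X + trace (Y::real^'n^'n)"
  by (simp add: trace_def sum.distrib)

lemma tr_diff: "trace (X - Y) = trace X - trace (Y::real^'n^'n)"
  by (simp add: trace_def sum_subtractf)

lemma tr_scale: "trace (c *\<^sub>R X) = c * trace (X::real^'n^'n)"
  by (simp add: trace_def sum_distrib_left)

lemma gdecay_scale:
  assumes "gdecay A" "\<bar>c\<bar> \<le> 1" shows "gdecay (c *\<^sub>R A)"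
proof -
  from assms(1) obtain K r where r: "0 < r" "r < 1" and b: "\<And>k. norm (mpow A k) \<le> K * r^k"
    unfolding gdecay_def by blast
  have "norm (mpow (c *\<^sub>R A) k) \<le> K * r^k" for k
  proof -
    have "norm (mpow (c *\<^sub>R A) k) = \<bar>c\<bar>^k * norm (mpow A k)" by (simp add: mpow_scaleR power_abs)
    also have "\<dots> \<le> 1 * norm (mpow A k)"
      by (rule mult_right_mono) (use assms(2) in \<open>auto intro: power_le_one\<close>)
    finally show ?thesis using b[of k] by simp
  qed
  then show ?thesis unfolding gdecay_def using r by blast
qed

lemma gdecay_sr: "spectral_radius A < 1 \<Longrightarrow> gdecay A"
  unfolding gdecay_def by (rule decay)

lemma part1_ineq:
  fixes A :: "real^'n^'n" and C :: "real^'n^'m" and R :: "real^'m^'m"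
  assumes hA: "gdecay A" and hQ: "pd Q" and hR: "pd R" and hobs: "observable A C"
    and hP: "pd P" and hric: "P = riccati A C Q R P" and p: "0 < p" "p \<le> 1"
  shows "trace (Lyap (sqrt (1-p) *\<^sub>R A) (p *\<^sub>R P + (1-p) *\<^sub>R Q)) < trace (Lyap A Q)"
proof -
  define T where "T = sqrt (1-p) *\<^sub>R A"
  define POP where "POP = Lyap A Q"
  define X where "X = Lyap T (p *\<^sub>R P + (1-p) *\<^sub>R Q)"
  define G where "G = prior A Q P - P"
  have gap: "POP - P = Lyap A G" "nn G" "0 < trace G"
    using riccati_gap[OF hA hQ hR hobs hP hric] unfolding POP_def G_def by auto
  have hT: "gdecay T" unfolding T_def using p by (intro gdecay_scale hA) auto
  have cT: "cmap T Y = (1-p) *\<^sub>R cmap A Y" for Y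
    unfolding T_def cmap_def using p
    by (simp add: matrix_scalar_ac scalar_matrix_assoc transpose_scalar)
  have eX: "X = cmap T X + (p *\<^sub>R P + (1-p) *\<^sub>R Q)" unfolding X_def by (rule Lyap_eq[OF hT])
  have eP: "POP = cmap A POP + Q" unfolding POP_def by (rule Lyap_eq[OF hA])
  have "X - POP = cmap T (X - POP) + p *\<^sub>R (P - POP)"
  proof -
    have "cmap T (X - POP) + p *\<^sub>R (P - POP) = cmap T X - (1-p) *\<^sub>R cmap A POP + p *\<^sub>R P - p *\<^sub>R POP"
      by (simp add: cmap_diff cT algebra_simps)
    also have "\<dots> = (X - (p *\<^sub>R P + (1-p) *\<^sub>R Q)) - (1-p) *\<^sub>R (POP - Q) + p *\<^sub>R P - p *\<^sub>R POP"
    proof -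
      have "cmap T X = X - (p *\<^sub>R P + (1-p) *\<^sub>R Q)" using eX by (simp add: algebra_simps)
      moreover have "cmap A POP = POP - Q" using eP by (simp add: algebra_simps)
      ultimately show ?thesis by simp
    qed
    also have "\<dots> = X - POP" by (simp add: algebra_simps)
    finally show ?thesis by simp
  qed
  then have "X - POP = Lyap T (p *\<^sub>R (P - POP))" by (rule Lyap_unique[OF hT])
  also have "p *\<^sub>R (P - POP) = (- p) *\<^sub>R Lyap A G"
    using gap(1) by (simp add: algebra_simps)
  also have "Lyap T ((- p) *\<^sub>R Lyap A G) = (- p) *\<^sub>R Lyap T (Lyap A G)" by (rule Lyap_scale[OF hT])
  finally have D: "trace X - trace POP = - p * trace (Lyap T (Lyap A G))"
    by (metis tr_diff tr_scale)
  have "trace G \<le> trace (Lyap A G)" by (rule trace_Lyap_ge[OF hA gap(2)])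
  also have "\<dots> \<le> trace (Lyap T (Lyap A G))" by (rule trace_Lyap_ge[OF hT nn_Lyap[OF hA gap(2)]])
  finally have "0 < trace (Lyap T (Lyap A G))" using gap(3) by simp
  then have "0 < p * trace (Lyap T (Lyap A G))" using p by simp
  then show ?thesis using D unfolding X_def POP_def T_def by simp
qed

lemma part2_ineq:
  fixes A :: "real^'n^'n"
  assumes hA: "gdecay A" and hQ: "pd Q" and ge: "0 \<le> ge" "ge < 1" and mu: "0 < mu"
    and hmuop:
      "(let POP = Lyap A Q; Pn = POP + P;
            W = Lyap (sqrt ge *\<^sub>R A) P; S = Lyap (sqrt ge *\<^sub>R A) Q;
            H = Lyap (sqrt ge *\<^sub>R A) Pn
        in (ge * (trace S - trace W) + trace W - trace POP)
           / ((ge - 1) * (trace H - trace W))) < mu"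
  shows "trace (Lyap A Q) < trace (Lyap (sqrt ge *\<^sub>R A)
            (((1-ge)*(1-mu)) *\<^sub>R P + ((1-ge)*mu) *\<^sub>R (Lyap A Q + P) + ge *\<^sub>R Q))"
proof -
  define T where "T = sqrt ge *\<^sub>R A"
  define POP where "POP = Lyap A Q"
  define W where "W = Lyap T P"
  define S where "S = Lyap T Q"
  define H where "H = Lyap T (POP + P)"
  have hT: "gdecay T" unfolding T_def using ge by (intro gdecay_scale hA) (auto simp: real_sqrt_le_1_iff)
  have HW: "H = Lyap T POP + W" unfolding H_def W_def by (rule Lyap_add[OF hT])
  have nQ: "nn Q" by (rule pd_nn[OF hQ])
  have "0 < trace Q" by (rule pd_trace[OF hQ])
  also have "trace Q \<le> trace POP" unfolding POP_def by (rule trace_Lyap_ge[OF hA nQ])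
  also have "trace POP \<le> trace (Lyap T POP)" by (rule trace_Lyap_ge[OF hT]) (simp add: POP_def nn_Lyap[OF hA nQ])
  finally have Dpos: "0 < trace H - trace W" unfolding HW tr_add by simp
  define N where "N = ge * (trace S - trace W) + trace W - trace POP"
  define D where "D = trace H - trace W"
  have "N / ((ge - 1) * D) < mu" using hmuop unfolding N_def D_def POP_def W_def S_def H_def T_def Let_def .
  moreover have neg: "(ge - 1) * D < 0" using ge Dpos unfolding D_def by (simp add: mult_neg_pos)
  ultimately have ND: "mu * ((ge - 1) * D) < N" by (simp add: divide_less_eq)
  have X: "Lyap T (((1-ge)*(1-mu)) *\<^sub>R P + ((1-ge)*mu) *\<^sub>R (POP + P) + ge *\<^sub>R Q)
      = ((1-ge)*(1-mu)) *\<^sub>R W + ((1-ge)*mu) *\<^sub>R H + ge *\<^sub>R S"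
    unfolding W_def H_def S_def by (simp add: Lyap_add[OF hT] Lyap_scale[OF hT])
  have "trace (((1-ge)*(1-mu)) *\<^sub>R W + ((1-ge)*mu) *\<^sub>R H + ge *\<^sub>R S) - trace POP
      = N - mu * ((ge - 1) * D)"
    unfolding N_def D_def tr_add tr_scale by (simp add: algebra_simps)
  with ND have "trace POP < trace (((1-ge)*(1-mu)) *\<^sub>R W + ((1-ge)*mu) *\<^sub>R H + ge *\<^sub>R S)" by simp
  then show ?thesis unfolding X[symmetric] T_def POP_def .
qed




definition Phi :: "(nat \<Rightarrow> nat \<Rightarrow> real) \<Rightarrow> (nat \<Rightarrow> nat \<Rightarrow> real) \<Rightarrow> (nat \<Rightarrow> nat \<Rightarrow> real)
   \<Rightarrow> real^'n^'n \<Rightarrow> real^'n^'n \<Rightarrow> real^'n^'n \<Rightarrow> real^'n^'n \<Rightarrow> nat \<Rightarrow> nat \<Rightarrow> real^'n^'n \<Rightarrow> real^'n^'n" where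
  "Phi c1 c2 c3 V1 V2 A Q a b Y = c1 a b *\<^sub>R V1 + c2 a b *\<^sub>R V2 + c3 a b *\<^sub>R (A ** Y ** transpose A + Q)"

primrec Zg :: "(nat \<Rightarrow> nat \<Rightarrow> real^'n^'n \<Rightarrow> real^'n^'n) \<Rightarrow> real^'n^'n
    \<Rightarrow> (nat \<Rightarrow> 'a \<Rightarrow> nat) \<Rightarrow> (nat \<Rightarrow> 'a \<Rightarrow> nat) \<Rightarrow> nat \<Rightarrow> 'a \<Rightarrow> real^'n^'n" where
  "Zg F Z0 la ua 0 \<omega> = Z0"
| "Zg F Z0 la ua (Suc k) \<omega> = F (la (Suc k) \<omega>) (ua (Suc k) \<omega>) (Zg F Z0 la ua k \<omega>)"

lemma Zg_cong:
  assumes "\<And>j. 1 \<le> j \<Longrightarrow> j \<le> k \<Longrightarrow> la j \<omega> = la' j \<omega>' \<and> ua j \<omega> = ua' j \<omega>'"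
  shows "Zg F Z0 la ua k \<omega> = Zg F Z0 la' ua' k \<omega>'"
  using assms by (induction k) auto

lemma meas_cmapA:
  fixes A :: "real^'n^'n"
  assumes "Y \<in> borel_measurable N" shows "(\<lambda>x. A ** Y x ** transpose A) \<in> borel_measurable N"
proof -
  have "cmap A \<in> borel_measurable borel"
    by (rule borel_measurable_continuous_onI[OF linear_continuous_on[OF bl_cmap]])
  from measurable_compose[OF assms this] show ?thesis unfolding cmap_def .
qed

lemma meas_Phi:
  assumes f: "f \<in> measurable N (count_space UNIV)" and g: "g \<in> measurable N (count_space UNIV)"
    and Y: "Y \<in> borel_measurable N"
  shows "(\<lambda>x. Phi c1 c2 c3 V1 V2 A Q (f x) (g x) (Y x)) \<in> borel_measurable N"
proof -
  have base: "(\<lambda>x. Phi c1 c2 c3 V1 V2 A Q a b (Y x)) \<in> borel_measurable N" for a b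
    unfolding Phi_def
    by (intro borel_measurable_add borel_measurable_scaleR borel_measurable_const meas_cmapA Y)
  have "(\<lambda>x. Phi c1 c2 c3 V1 V2 A Q a (g x) (Y x)) \<in> borel_measurable N" for a
    by (rule measurable_compose_countable[where f="\<lambda>b x. Phi c1 c2 c3 V1 V2 A Q a b (Y x)", OF base g])
  then show ?thesis
    by (rule measurable_compose_countable[where f="\<lambda>a x. Phi c1 c2 c3 V1 V2 A Q a (g x) (Y x)", OF _ f])
qed

lemma bound_Zg:
  fixes A :: "real^'n^'n"
  assumes c: "\<And>a b. \<bar>c1 a b\<bar> \<le> 1" "\<And>a b. \<bar>c2 a b\<bar> \<le> 1" "\<And>a b. \<bar>c3 a b\<bar> \<le> 1"
  shows "\<exists>B. \<forall>la ua (\<omega>::'a). norm (Zg (Phi c1 c2 c3 V1 V2 A Q) Z0 la ua k \<omega>) \<le> B"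
proof (induction k)
  case 0 then show ?case by auto
next
  case (Suc k)
  then obtain B where B: "\<And>la ua (\<omega>::'a). norm (Zg (Phi c1 c2 c3 V1 V2 A Q) Z0 la ua k \<omega>) \<le> B" by blast
  have st: "norm (Phi c1 c2 c3 V1 V2 A Q a b Y) \<le> norm V1 + norm V2 + (real CARD('n)^4 * (norm A)^2 * B + norm Q)"
    if "norm Y \<le> B" for a b Y
  proof -
    have n1: "norm (c1 a b *\<^sub>R V1) \<le> norm V1" using c(1)[of a b] by (simp add: mult_left_le_one_le)
    have n2: "norm (c2 a b *\<^sub>R V2) \<le> norm V2" using c(2)[of a b] by (simp add: mult_left_le_one_le)
    have "norm (A ** Y ** transpose A) \<le> real CARD('n)^4 * (norm A)^2 * norm Y"
      using norm_cmap[of A Y] unfolding cmap_def .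
    also have "\<dots> \<le> real CARD('n)^4 * (norm A)^2 * B" using that by (intro mult_left_mono) auto
    finally have "norm (A ** Y ** transpose A + Q) \<le> real CARD('n)^4 * (norm A)^2 * B + norm Q"
      by (rule order_trans[OF norm_triangle_ineq add_right_mono])
    then have n3: "norm (c3 a b *\<^sub>R (A ** Y ** transpose A + Q)) \<le> real CARD('n)^4 * (norm A)^2 * B + norm Q"
      using c(3)[of a b] by (simp add: mult_left_le_one_le order_trans[OF mult_left_le_one_le])
    show ?thesis unfolding Phi_def
      by (rule order_trans[OF norm_triangle_ineq add_mono[OF order_trans[OF norm_triangle_ineq add_mono[OF n1 n2]] n3]])
  qed
  show ?case
  proof (intro exI allI)
    fix la ua and \<omega> :: 'a
    show "norm (Zg (Phi c1 c2 c3 V1 V2 A Q) Z0 la ua (Suc k) \<omega>)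
        \<le> norm V1 + norm V2 + (real CARD('n)^4 * (norm A)^2 * B + norm Q)"
      using st[OF B] by simp
  qed
qed

context prob_space begin

lemma indep_scaleR_integral:
  fixes h :: "'x \<Rightarrow> real^'n^'m" and g :: "'x \<Rightarrow> real"
  assumes ind: "indep_var N1 \<phi> N2 \<psi>" and g: "g \<in> borel_measurable N1" and h: "h \<in> borel_measurable N2"
    and bg: "\<And>x. \<bar>g x\<bar> \<le> Bg" and bh: "\<And>x. norm (h x) \<le> Bh"
  shows "expectation (\<lambda>\<omega>. g (\<phi> \<omega>) *\<^sub>R h (\<psi> \<omega>)) = expectation (\<lambda>\<omega>. g (\<phi> \<omega>)) *\<^sub>R expectation (\<lambda>\<omega>. h (\<psi> \<omega>))"
proof -
  have rv: "random_variable N1 \<phi>" "random_variable N2 \<psi>" using ind unfolding indep_var_eq by auto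
  have gm: "(\<lambda>\<omega>. g (\<phi> \<omega>)) \<in> borel_measurable M" using measurable_compose[OF rv(1) g] .
  have hm: "(\<lambda>\<omega>. h (\<psi> \<omega>)) \<in> borel_measurable M" using measurable_compose[OF rv(2) h] .
  have hab: "(\<lambda>x. h x $ a $ b) \<in> borel_measurable N2" for a b
  proof -
    have "bounded_linear (\<lambda>X::real^'n^'m. X $ a $ b)"
      using bounded_linear_compose[OF bounded_linear_vec_nth[of b] bounded_linear_vec_nth[of a]] by simp
    from measurable_compose[OF h borel_measurable_continuous_onI[OF linear_continuous_on[OF this]]]
    show ?thesis by simp
  qed
  have gi: "integrable M (\<lambda>\<omega>. g (\<phi> \<omega>))"
    by (rule integrable_const_bound[where B=Bg]) (use gm bg in auto)
  have hi: "integrable M (\<lambda>\<omega>. h (\<psi> \<omega>))"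
    by (rule integrable_const_bound[where B=Bh]) (use hm bh in auto)
  have pi: "integrable M (\<lambda>\<omega>. g (\<phi> \<omega>) *\<^sub>R h (\<psi> \<omega>))"
  proof (rule integrable_const_bound[where B="Bg * Bh"])
    show "AE x in M. norm (g (\<phi> x) *\<^sub>R h (\<psi> x)) \<le> Bg * Bh"
      using bg bh by (auto intro!: mult_mono order_trans[OF abs_ge_zero bg])
    show "(\<lambda>\<omega>. g (\<phi> \<omega>) *\<^sub>R h (\<psi> \<omega>)) \<in> borel_measurable M"
      by (intro borel_measurable_scaleR gm hm)
  qed
  show ?thesis
  proof (intro vecI)
    fix a b
    have bl: "bounded_linear (\<lambda>X::real^'n^'m. X $ a $ b)"
      using bounded_linear_compose[OF bounded_linear_vec_nth[of b] bounded_linear_vec_nth[of a]] by simp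
    have habi: "integrable M (\<lambda>\<omega>. h (\<psi> \<omega>) $ a $ b)"
      using integrable_bounded_linear[OF bl hi] by simp
    have "expectation (\<lambda>\<omega>. g (\<phi> \<omega>) *\<^sub>R h (\<psi> \<omega>)) $ a $ b = expectation (\<lambda>\<omega>. (g (\<phi> \<omega>) *\<^sub>R h (\<psi> \<omega>)) $ a $ b)"
      using integral_bounded_linear[OF bl pi] by simp
    also have "\<dots> = expectation (\<lambda>\<omega>. g (\<phi> \<omega>) * h (\<psi> \<omega>) $ a $ b)" by simp
    also have "\<dots> = expectation (\<lambda>\<omega>. g (\<phi> \<omega>)) * expectation (\<lambda>\<omega>. h (\<psi> \<omega>) $ a $ b)"
    proof -
      have "indep_var borel (g \<circ> \<phi>) borel ((\<lambda>x. h x $ a $ b) \<circ> \<psi>)"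
        by (rule indep_var_compose[OF ind g hab])
      then show ?thesis
        using indep_var_lebesgue_integral[of "\<lambda>\<omega>. g (\<phi> \<omega>)" "\<lambda>\<omega>. h (\<psi> \<omega>) $ a $ b"] gi habi
        by (simp add: comp_def)
    qed
    also have "expectation (\<lambda>\<omega>. h (\<psi> \<omega>) $ a $ b) = expectation (\<lambda>\<omega>. h (\<psi> \<omega>)) $ a $ b"
      using integral_bounded_linear[OF bl hi] by simp
    finally show "expectation (\<lambda>\<omega>. g (\<phi> \<omega>) *\<^sub>R h (\<psi> \<omega>)) $ a $ b
        = (expectation (\<lambda>\<omega>. g (\<phi> \<omega>)) *\<^sub>R expectation (\<lambda>\<omega>. h (\<psi> \<omega>))) $ a $ b" by simp
  qed
qed

end




lemma meas2:
  assumes f: "f \<in> measurable N (count_space UNIV)" and g: "g \<in> measurable N (count_space UNIV)"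
  fixes c :: "nat \<Rightarrow> nat \<Rightarrow> real"
  shows "(\<lambda>x. c (f x) (g x)) \<in> borel_measurable N"
proof -
  have "(\<lambda>x. c a (g x)) \<in> borel_measurable N" for a
    by (rule measurable_compose_countable[where f="\<lambda>b x. c a b", OF _ g]) simp
  then show ?thesis
    by (rule measurable_compose_countable[where f="\<lambda>a x. c a (g x)", OF _ f])
qed

context prob_space begin

lemma rv_of_indep:
  assumes ind: "indep_vars (\<lambda>_. count_space UNIV) (\<lambda>i. case i of Inl k \<Rightarrow> la k | Inr k \<Rightarrow> ua k)
                   (Inl ` {1..} \<union> Inr ` {1..})" and j: "1 \<le> j"
  shows "la j \<in> measurable M (count_space UNIV)" "ua j \<in> measurable M (count_space UNIV)"
proof -
  have "Inl j \<in> Inl ` {1..} \<union> Inr ` {1..}" "Inr j \<in> Inl ` {(1::nat)..} \<union> Inr ` {1..}" using j by auto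
  then show "la j \<in> measurable M (count_space UNIV)" "ua j \<in> measurable M (count_space UNIV)"
    using ind unfolding indep_vars_def by force+
qed

lemma step_expect:
  fixes la ua :: "nat \<Rightarrow> 'a \<Rightarrow> nat" and A :: "real^'n^'n"
  assumes ind: "indep_vars (\<lambda>_. count_space UNIV) (\<lambda>i. case i of Inl k \<Rightarrow> la k | Inr k \<Rightarrow> ua k)
                   (Inl ` {1..} \<union> Inr ` {1..})"
    and c: "\<And>a b. \<bar>c1 a b\<bar> \<le> 1" "\<And>a b. \<bar>c2 a b\<bar> \<le> 1" "\<And>a b. \<bar>c3 a b\<bar> \<le> 1"
  shows "expectation (Zg (Phi c1 c2 c3 V1 V2 A Q) Z0 la ua (Suc k)) =
     expectation (\<lambda>\<omega>. c1 (la (Suc k) \<omega>) (ua (Suc k) \<omega>)) *\<^sub>R V1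
     + expectation (\<lambda>\<omega>. c2 (la (Suc k) \<omega>) (ua (Suc k) \<omega>)) *\<^sub>R V2
     + expectation (\<lambda>\<omega>. c3 (la (Suc k) \<omega>) (ua (Suc k) \<omega>)) *\<^sub>R
         (A ** expectation (Zg (Phi c1 c2 c3 V1 V2 A Q) Z0 la ua k) ** transpose A + Q)"
proof -
  define F where "F = Phi c1 c2 c3 V1 V2 A Q"
  define Xv where "Xv = (\<lambda>i. case i of Inl k \<Rightarrow> la k | Inr k \<Rightarrow> ua k)"
  define I where "I = Inl ` {1::nat..} \<union> Inr ` {1::nat..}"
  define cs where "cs = (\<lambda>_::nat+nat. count_space (UNIV::nat set))"
  have ind': "indep_vars cs Xv I" using ind unfolding Xv_def I_def cs_def .
  note rv = rv_of_indep[OF ind]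
  have measZ: "Zg F Z0 la ua j \<in> borel_measurable M" for j
  proof (induction j)
    case 0 then show ?case by simp
  next
    case (Suc j)
    have "(\<lambda>\<omega>. F (la (Suc j) \<omega>) (ua (Suc j) \<omega>) (Zg F Z0 la ua j \<omega>)) \<in> borel_measurable M"
      unfolding F_def by (rule meas_Phi[OF rv(1) rv(2) Suc[unfolded F_def]]) simp_all
    moreover have "Zg F Z0 la ua (Suc j) = (\<lambda>\<omega>. F (la (Suc j) \<omega>) (ua (Suc j) \<omega>) (Zg F Z0 la ua j \<omega>))"
      by (rule ext) simp
    ultimately show ?case by simp
  qed
  have "\<exists>B. \<forall>la ua (\<omega>::'a). norm (Zg F Z0 la ua k \<omega>) \<le> B"
    unfolding F_def by (rule bound_Zg[OF c])
  then obtain B where B: "\<And>la ua (\<omega>::'a). norm (Zg F Z0 la ua k \<omega>) \<le> B" by blast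
  have "\<exists>B. \<forall>la ua (\<omega>::unit). norm (Zg F Z0 la ua k \<omega>) \<le> B"
    unfolding F_def by (rule bound_Zg[OF c])
  then obtain B' where B': "\<And>la ua (\<omega>::unit). norm (Zg F Z0 la ua k \<omega>) \<le> B'" by blast
  define Ak :: "(nat + nat) set" where "Ak = {Inl (Suc k), Inr (Suc k)}"
  define Bk :: "(nat + nat) set" where "Bk = Inl ` {1..k} \<union> Inr ` {1..k}"
  define \<phi> where "\<phi> = (\<lambda>\<omega>. restrict (\<lambda>i. Xv i \<omega>) Ak)"
  define \<psi> where "\<psi> = (\<lambda>\<omega>. restrict (\<lambda>i. Xv i \<omega>) Bk)"
  have indep: "indep_var (PiM Ak cs) \<phi> (PiM Bk cs) \<psi>"
    unfolding \<phi>_def \<psi>_def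
    by (rule indep_var_restrict[OF ind']) (auto simp: Ak_def Bk_def I_def)
  define g where "g = (\<lambda>x::nat+nat \<Rightarrow> nat. c3 (x (Inl (Suc k))) (x (Inr (Suc k))))"
  define hk where "hk = (\<lambda>x::nat+nat \<Rightarrow> nat. Zg F Z0 (\<lambda>j _. x (Inl j)) (\<lambda>j _. x (Inr j)) k ())"
  define h where "h = (\<lambda>x. A ** hk x ** transpose A + Q)"
  have gm: "g \<in> borel_measurable (PiM Ak cs)"
    unfolding g_def
    by (rule meas2) (auto simp: Ak_def cs_def intro!: measurable_component_singleton[where M=cs, unfolded cs_def])
  have hkm: "(\<lambda>x::nat+nat \<Rightarrow> nat. Zg F Z0 (\<lambda>j _. x (Inl j)) (\<lambda>j _. x (Inr j)) j ()) \<in> borel_measurable (PiM Bk cs)"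
    if "j \<le> k" for j
    using that
  proof (induction j)
    case 0 then show ?case by simp
  next
    case (Suc j)
    have m1: "(\<lambda>x::nat+nat \<Rightarrow> nat. x (Inl (Suc j))) \<in> measurable (PiM Bk cs) (count_space UNIV)"
      using Suc.prems unfolding cs_def
      by (intro measurable_component_singleton[where M="\<lambda>_. count_space UNIV", unfolded cs_def])
         (auto simp: Bk_def)
    have m2: "(\<lambda>x::nat+nat \<Rightarrow> nat. x (Inr (Suc j))) \<in> measurable (PiM Bk cs) (count_space UNIV)"
      using Suc.prems unfolding cs_def
      by (intro measurable_component_singleton[where M="\<lambda>_. count_space UNIV", unfolded cs_def])
         (auto simp: Bk_def)
    have "(\<lambda>x. F (x (Inl (Suc j))) (x (Inr (Suc j))) (Zg F Z0 (\<lambda>j _. x (Inl j)) (\<lambda>j _. x (Inr j)) j ()))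
        \<in> borel_measurable (PiM Bk cs)"
      unfolding F_def by (rule meas_Phi[OF m1 m2 Suc.IH[unfolded F_def]]) (use Suc.prems in simp)
    then show ?case by simp
  qed
  have hm: "h \<in> borel_measurable (PiM Bk cs)"
    unfolding h_def hk_def
    by (intro borel_measurable_add borel_measurable_const meas_cmapA hkm) simp
  have bg: "\<bar>g x\<bar> \<le> 1" for x unfolding g_def by (rule c(3))
  have bh: "norm (h x) \<le> real CARD('n)^4 * (norm A)^2 * B' + norm Q" for x
  proof -
    have "norm (A ** hk x ** transpose A) \<le> real CARD('n)^4 * (norm A)^2 * norm (hk x)"
      using norm_cmap[of A "hk x"] unfolding cmap_def .
    also have "\<dots> \<le> real CARD('n)^4 * (norm A)^2 * B'" unfolding hk_def by (intro mult_left_mono B') auto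
    finally show ?thesis unfolding h_def by (rule order_trans[OF norm_triangle_ineq add_right_mono])
  qed
  have gphi: "g (\<phi> \<omega>) = c3 (la (Suc k) \<omega>) (ua (Suc k) \<omega>)" for \<omega>
    by (simp add: g_def \<phi>_def Ak_def Xv_def)
  have hpsi: "h (\<psi> \<omega>) = A ** Zg F Z0 la ua k \<omega> ** transpose A + Q" for \<omega>
  proof -
    have "hk (\<psi> \<omega>) = Zg F Z0 la ua k \<omega>"
      unfolding hk_def by (rule Zg_cong) (simp add: \<psi>_def Bk_def Xv_def)
    then show ?thesis by (simp add: h_def)
  qed
  have key: "expectation (\<lambda>\<omega>. g (\<phi> \<omega>) *\<^sub>R h (\<psi> \<omega>)) = expectation (\<lambda>\<omega>. g (\<phi> \<omega>)) *\<^sub>R expectation (\<lambda>\<omega>. h (\<psi> \<omega>))"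
    by (rule indep_scaleR_integral[OF indep gm hm bg bh])
  have cm: "(\<lambda>\<omega>. c (la (Suc k) \<omega>) (ua (Suc k) \<omega>)) \<in> borel_measurable M" for c :: "nat \<Rightarrow> nat \<Rightarrow> real"
    by (rule meas2[OF rv(1) rv(2)]) simp_all
  have ci: "integrable M (\<lambda>\<omega>. c (la (Suc k) \<omega>) (ua (Suc k) \<omega>))" if "\<And>a b. \<bar>c a b\<bar> \<le> 1" for c :: "nat \<Rightarrow> nat \<Rightarrow> real"
    by (rule integrable_const_bound[where B="1::real"]) (use that cm in auto)
  have Zi: "integrable M (Zg F Z0 la ua k)"
    by (rule integrable_const_bound[where B=B]) (use B measZ in auto)
  have Ci: "integrable M (\<lambda>\<omega>. A ** Zg F Z0 la ua k \<omega> ** transpose A)"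
    using integrable_bounded_linear[OF bl_cmap[of A] Zi] unfolding cmap_def .
  have EY: "expectation (\<lambda>\<omega>. A ** Zg F Z0 la ua k \<omega> ** transpose A + Q)
      = A ** expectation (Zg F Z0 la ua k) ** transpose A + Q"
  proof -
    have "expectation (\<lambda>\<omega>. A ** Zg F Z0 la ua k \<omega> ** transpose A + Q)
        = expectation (\<lambda>\<omega>. A ** Zg F Z0 la ua k \<omega> ** transpose A) + expectation (\<lambda>\<omega>. Q)"
      by (rule Bochner_Integration.integral_add[OF Ci]) simp
    also have "expectation (\<lambda>\<omega>. A ** Zg F Z0 la ua k \<omega> ** transpose A) = A ** expectation (Zg F Z0 la ua k) ** transpose A"
      using integral_bounded_linear[OF bl_cmap[of A] Zi] unfolding cmap_def .
    also have "expectation (\<lambda>\<omega>. Q) = Q" by (simp add: prob_space)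
    finally show ?thesis .
  qed
  have Zs: "Zg F Z0 la ua (Suc k) \<omega> = c1 (la (Suc k) \<omega>) (ua (Suc k) \<omega>) *\<^sub>R V1
      + c2 (la (Suc k) \<omega>) (ua (Suc k) \<omega>) *\<^sub>R V2 + g (\<phi> \<omega>) *\<^sub>R h (\<psi> \<omega>)" for \<omega>
    by (simp add: gphi hpsi F_def Phi_def)
  have i1: "integrable M (\<lambda>\<omega>. c1 (la (Suc k) \<omega>) (ua (Suc k) \<omega>) *\<^sub>R V1)"
    using ci[of c1, OF c(1)] by simp
  have i2: "integrable M (\<lambda>\<omega>. c2 (la (Suc k) \<omega>) (ua (Suc k) \<omega>) *\<^sub>R V2)"
    using ci[of c2, OF c(2)] by simp
  have i3: "integrable M (\<lambda>\<omega>. g (\<phi> \<omega>) *\<^sub>R h (\<psi> \<omega>))"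
  proof -
    have "integrable M (\<lambda>\<omega>. c3 (la (Suc k) \<omega>) (ua (Suc k) \<omega>) *\<^sub>R (A ** Zg F Z0 la ua k \<omega> ** transpose A + Q))"
    proof (rule integrable_const_bound[where B="real CARD('n)^4 * (norm A)^2 * B + norm Q"])
      show "AE x in M. norm (c3 (la (Suc k) x) (ua (Suc k) x) *\<^sub>R (A ** Zg F Z0 la ua k x ** transpose A + Q))
          \<le> real CARD('n)^4 * (norm A)^2 * B + norm Q"
      proof (rule AE_I2)
        fix x
        have "norm (A ** Zg F Z0 la ua k x ** transpose A) \<le> real CARD('n)^4 * (norm A)^2 * norm (Zg F Z0 la ua k x)"
          using norm_cmap[of A] unfolding cmap_def .
        also have "\<dots> \<le> real CARD('n)^4 * (norm A)^2 * B" by (intro mult_left_mono B) auto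
        finally have "norm (A ** Zg F Z0 la ua k x ** transpose A + Q) \<le> real CARD('n)^4 * (norm A)^2 * B + norm Q"
          by (rule order_trans[OF norm_triangle_ineq add_right_mono])
        then show "norm (c3 (la (Suc k) x) (ua (Suc k) x) *\<^sub>R (A ** Zg F Z0 la ua k x ** transpose A + Q))
          \<le> real CARD('n)^4 * (norm A)^2 * B + norm Q"
          using c(3) by (simp add: order_trans[OF mult_left_le_one_le])
      qed
      show "(\<lambda>\<omega>. c3 (la (Suc k) \<omega>) (ua (Suc k) \<omega>) *\<^sub>R (A ** Zg F Z0 la ua k \<omega> ** transpose A + Q)) \<in> borel_measurable M"
        by (intro borel_measurable_scaleR borel_measurable_add borel_measurable_const meas_cmapA measZ cm)
    qed
    then show ?thesis by (simp add: gphi hpsi)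
  qed
  have "expectation (Zg F Z0 la ua (Suc k)) = expectation (\<lambda>\<omega>. c1 (la (Suc k) \<omega>) (ua (Suc k) \<omega>) *\<^sub>R V1)
      + expectation (\<lambda>\<omega>. c2 (la (Suc k) \<omega>) (ua (Suc k) \<omega>) *\<^sub>R V2) + expectation (\<lambda>\<omega>. g (\<phi> \<omega>) *\<^sub>R h (\<psi> \<omega>))"
    unfolding Zs using i1 i2 i3 by simp
  also have "\<dots> = expectation (\<lambda>\<omega>. c1 (la (Suc k) \<omega>) (ua (Suc k) \<omega>)) *\<^sub>R V1
     + expectation (\<lambda>\<omega>. c2 (la (Suc k) \<omega>) (ua (Suc k) \<omega>)) *\<^sub>R V2
     + expectation (\<lambda>\<omega>. c3 (la (Suc k) \<omega>) (ua (Suc k) \<omega>)) *\<^sub>R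
         (A ** expectation (Zg F Z0 la ua k) ** transpose A + Q)"
    unfolding key using ci[of c1, OF c(1)] ci[of c2, OF c(2)] by (simp add: gphi hpsi EY)
  finally show ?thesis unfolding F_def .
qed

end




lemma limit_from_step:
  fixes A :: "real^'n^'n"
  assumes gA: "gdecay A" and ec: "0 \<le> ec" "ec \<le> 1"
    and st: "\<And>k. E (Suc k) = ea *\<^sub>R Va + eb *\<^sub>R Vb + ec *\<^sub>R (A ** E k ** transpose A + Q)"
  shows "E \<longlonglongrightarrow> Lyap (sqrt ec *\<^sub>R A) (ea *\<^sub>R Va + eb *\<^sub>R Vb + ec *\<^sub>R Q)"
proof (rule Lyap_limit)
  show "gdecay (sqrt ec *\<^sub>R A)" using ec by (intro gdecay_scale gA) auto
  fix k
  have cT: "cmap (sqrt ec *\<^sub>R A) Y = ec *\<^sub>R (A ** Y ** transpose A)" for Y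
    unfolding cmap_def using ec
    by (simp add: matrix_scalar_ac scalar_matrix_assoc transpose_scalar)
  show "E (Suc k) = cmap (sqrt ec *\<^sub>R A) (E k) + (ea *\<^sub>R Va + eb *\<^sub>R Vb + ec *\<^sub>R Q)"
    unfolding st cT by (simp add: algebra_simps)
qed

context prob_space begin

lemma E_prod:
  fixes la ua :: "nat \<Rightarrow> 'a \<Rightarrow> nat" and p q :: "nat \<Rightarrow> real"
  assumes ind: "indep_vars (\<lambda>_. count_space UNIV) (\<lambda>i. case i of Inl k \<Rightarrow> la k | Inr k \<Rightarrow> ua k)
                   (Inl ` {1..} \<union> Inr ` {1..})" and j: "1 \<le> j"
    and bp: "\<And>a. \<bar>p a\<bar> \<le> 1" and bq: "\<And>a. \<bar>q a\<bar> \<le> 1"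
  shows "expectation (\<lambda>\<omega>. p (la j \<omega>) * q (ua j \<omega>)) = expectation (\<lambda>\<omega>. p (la j \<omega>)) * expectation (\<lambda>\<omega>. q (ua j \<omega>))"
proof -
  define Xv where "Xv = (\<lambda>i. case i of Inl k \<Rightarrow> la k | Inr k \<Rightarrow> ua k)"
  define cs where "cs = (\<lambda>_::nat+nat. count_space (UNIV::nat set))"
  have ind': "indep_vars cs Xv (Inl ` {1..} \<union> Inr ` {1..})" using ind unfolding Xv_def cs_def .
  have iv: "indep_var (PiM {Inl j} cs) (\<lambda>\<omega>. restrict (\<lambda>i. Xv i \<omega>) {Inl j})
      (PiM {Inr j} cs) (\<lambda>\<omega>. restrict (\<lambda>i. Xv i \<omega>) {Inr j})"
    by (rule indep_var_restrict[OF ind']) (use j in auto)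
  have mP: "(\<lambda>x::nat+nat \<Rightarrow> nat. p (x (Inl j))) \<in> borel_measurable (PiM {Inl j} cs)"
    by (rule measurable_compose_countable[where f="\<lambda>a x. p a"])
       (auto simp: cs_def intro!: measurable_component_singleton[where M=cs, unfolded cs_def])
  have mQ: "(\<lambda>x::nat+nat \<Rightarrow> nat. q (x (Inr j))) \<in> borel_measurable (PiM {Inr j} cs)"
    by (rule measurable_compose_countable[where f="\<lambda>a x. q a"])
       (auto simp: cs_def intro!: measurable_component_singleton[where M=cs, unfolded cs_def])
  from indep_var_compose[OF iv mP mQ]
  have iv2: "indep_var borel (\<lambda>\<omega>. p (la j \<omega>)) borel (\<lambda>\<omega>. q (ua j \<omega>))"
    by (simp add: comp_def Xv_def)
  note rv = rv_of_indep[OF ind j]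
  have mp: "(\<lambda>\<omega>. p (la j \<omega>)) \<in> borel_measurable M"
    by (rule measurable_compose_countable[where f="\<lambda>a x. p a", OF _ rv(1)]) simp
  have mq: "(\<lambda>\<omega>. q (ua j \<omega>)) \<in> borel_measurable M"
    by (rule measurable_compose_countable[where f="\<lambda>a x. q a", OF _ rv(2)]) simp
  have ip: "integrable M (\<lambda>\<omega>. p (la j \<omega>))"
    by (rule integrable_const_bound[where B="1::real"]) (use bp mp in auto)
  have iq: "integrable M (\<lambda>\<omega>. q (ua j \<omega>))"
    by (rule integrable_const_bound[where B="1::real"]) (use bq mq in auto)
  show ?thesis by (rule indep_var_lebesgue_integral[OF iv2 ip iq])
qed

lemma E_ind:
  assumes f: "f \<in> measurable M (count_space UNIV)"
  shows "expectation (\<lambda>\<omega>. if f \<omega> = c then 1 else 0::real) = prob {\<omega> \<in> space M. f \<omega> = c}"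
proof -
  have "expectation (\<lambda>\<omega>. if f \<omega> = c then 1 else 0::real) = expectation (indicator {\<omega> \<in> space M. f \<omega> = c})"
    by (rule Bochner_Integration.integral_cong) (simp_all add: indicator_def)
  also have "\<dots> = prob {\<omega> \<in> space M. f \<omega> = c}"
    by (simp add: Bochner_Integration.integral_indicator Int_absorb2)
  finally show ?thesis .
qed

lemma ev_eq:
  assumes f: "f \<in> measurable M (count_space UNIV)"
  shows "{\<omega> \<in> space M. f \<omega> = c} \<in> events"
proof -
  have "f -` {c} \<inter> space M \<in> events" by (rule measurable_sets[OF f]) simp
  moreover have "f -` {c} \<inter> space M = {\<omega> \<in> space M. f \<omega> = c}" by auto
  ultimately show ?thesis by simp
qed

lemma prob_one:
  fixes f :: "'a \<Rightarrow> nat"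
  assumes f: "f \<in> measurable M (count_space UNIV)" and v: "\<And>\<omega>. \<omega> \<in> space M \<Longrightarrow> f \<omega> \<in> {0,1}"
  shows "prob {\<omega> \<in> space M. f \<omega> = 1} = 1 - prob {\<omega> \<in> space M. f \<omega> = 0}"
proof -
  have "{\<omega> \<in> space M. f \<omega> = 1} = space M - {\<omega> \<in> space M. f \<omega> = 0}"
  proof -
    have "(x \<in> {\<omega> \<in> space M. f \<omega> = 1}) = (x \<in> space M - {\<omega> \<in> space M. f \<omega> = 0})" for x
      using v[of x] by auto
    then show ?thesis by blast
  qed
  then show ?thesis using prob_compl[OF ev_eq[OF f]] by simp
qed

end




context prob_space begin

lemma E_one_minus:
  fixes c :: "nat \<Rightarrow> nat \<Rightarrow> real"
  assumes f: "f \<in> measurable M (count_space UNIV)" and g: "g \<in> measurable M (count_space UNIV)"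
    and b: "\<And>a b. \<bar>c a b\<bar> \<le> 1"
  shows "expectation (\<lambda>\<omega>. 1 - c (f \<omega>) (g \<omega>)) = 1 - expectation (\<lambda>\<omega>. c (f \<omega>) (g \<omega>))"
proof -
  have i: "integrable M (\<lambda>\<omega>. c (f \<omega>) (g \<omega>))"
    by (rule integrable_const_bound[where B="1::real"]) (use b meas2[OF f g] in auto)
  have "expectation (\<lambda>\<omega>. 1 - c (f \<omega>) (g \<omega>)) = expectation (\<lambda>\<omega>. 1) - expectation (\<lambda>\<omega>. c (f \<omega>) (g \<omega>))"
    by (rule Bochner_Integration.integral_diff[OF _ i]) simp
  then show ?thesis by (simp add: prob_space)
qed

lemma E_add2:
  fixes c d :: "nat \<Rightarrow> nat \<Rightarrow> real"
  assumes f: "f \<in> measurable M (count_space UNIV)" and g: "g \<in> measurable M (count_space UNIV)"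
    and b: "\<And>a b. \<bar>c a b\<bar> \<le> 1" "\<And>a b. \<bar>d a b\<bar> \<le> 1"
  shows "expectation (\<lambda>\<omega>. c (f \<omega>) (g \<omega>) + d (f \<omega>) (g \<omega>))
     = expectation (\<lambda>\<omega>. c (f \<omega>) (g \<omega>)) + expectation (\<lambda>\<omega>. d (f \<omega>) (g \<omega>))"
proof -
  have i1: "integrable M (\<lambda>\<omega>. c (f \<omega>) (g \<omega>))"
    by (rule integrable_const_bound[where B="1::real"]) (use b meas2[OF f g] in auto)
  have i2: "integrable M (\<lambda>\<omega>. d (f \<omega>) (g \<omega>))"
    by (rule integrable_const_bound[where B="1::real"]) (use b meas2[OF f g] in auto)
  show ?thesis by (rule Bochner_Integration.integral_add[OF i1 i2])
qed

end

theorem theorem1: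
  fixes A :: "real^'n^'n" and C :: "real^'n^'m" and Q :: "real^'n^'n" and R :: "real^'m^'m"
    and Pbar P0 Pe0 :: "real^'n^'n"
    and gbar ge mu :: real
    and M :: "'a measure"
    and lam lame u :: "nat \<Rightarrow> 'a \<Rightarrow> nat"
  assumes hA: "spectral_radius A < 1"
    and hQ: "pd Q" and hR: "pd R"
    and hobs: "observable A C"
    and hctr: "controllable A (msqrt Q)"
    and hPbar: "pd Pbar" "Pbar = riccati A C Q R Pbar" "stabilizing A C Q R Pbar"
    and hgbar: "0 \<le> gbar" "gbar < 1"
    and hge: "0 \<le> ge" "ge < 1"
    and hmu: "0 < mu" "mu < 1"
    and hM: "prob_space M"
    and hvals: "\<And>k \<omega>. k \<ge> 1 \<Longrightarrow> \<omega> \<in> space M \<Longrightarrow>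
                  lam k \<omega> \<in> {0,1} \<and> lame k \<omega> \<in> {0,1} \<and> u k \<omega> \<in> {0,1}"
    and hdist: "\<And>k. k \<ge> 1 \<Longrightarrow>
                  measure M {\<omega> \<in> space M. lam k \<omega> = 0} = gbar \<and>
                  measure M {\<omega> \<in> space M. lame k \<omega> = 0} = ge \<and>
                  measure M {\<omega> \<in> space M. u k \<omega> = 0} = mu"
    and hindep: "prob_space.indep_vars M (\<lambda>_. count_space UNIV)
                   (\<lambda>i. case i of Inl k \<Rightarrow> lam k | Inr k \<Rightarrow> u k)
                   (Inl ` {1..} \<union> Inr ` {1..})"
    and hindep_e: "prob_space.indep_vars M (\<lambda>_. count_space UNIV)
                   (\<lambda>i. case i of Inl k \<Rightarrow> lame k | Inr k \<Rightarrow> u k)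
                   (Inl ` {1..} \<union> Inr ` {1..})"
    and hP0: "psd P0" and hPe0: "psd Pe0"
    and hmuop:
      "(let POP = Lyap A Q; Pn = POP + Pbar;
            W = Lyap (sqrt ge *\<^sub>R A) Pbar; S = Lyap (sqrt ge *\<^sub>R A) Q;
            H = Lyap (sqrt ge *\<^sub>R A) Pn
        in (ge * (trace S - trace W) + trace W - trace POP)
           / ((ge - 1) * (trace H - trace W))) < mu"
  shows "(\<exists>Pinf. (\<lambda>k. prob_space.expectation M (Pleg A Q Pbar P0 lam u k)) \<longlonglongrightarrow> Pinf
            \<and> trace Pinf < trace (Lyap A Q))
       \<and> (\<exists>Pinf. (\<lambda>k. prob_space.expectation M
                     (Peav A Q Pbar (Lyap A Q + Pbar) Pe0 lame u k)) \<longlonglongrightarrow> Pinf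
            \<and> trace (Lyap A Q) < trace Pinf)"
proof -
  interpret P: prob_space M by (rule hM)
  have gA: "gdecay A" by (rule gdecay_sr[OF hA])
  define ind1 :: "nat \<Rightarrow> real" where "ind1 = (\<lambda>a. if a = 1 then 1 else 0)"
  define ind0 :: "nat \<Rightarrow> real" where "ind0 = (\<lambda>a. if a = 0 then 1 else 0)"
  have b1: "\<bar>ind1 a\<bar> \<le> 1" and b0: "\<bar>ind0 a\<bar> \<le> 1" for a by (simp_all add: ind1_def ind0_def)
  note rvL = P.rv_of_indep[OF hindep] and rvE = P.rv_of_indep[OF hindep_e]
  have Pl1: "P.expectation (\<lambda>\<omega>. ind1 (lam j \<omega>)) = 1 - gbar" if "1 \<le> j" for j
  proof -
    have "P.expectation (\<lambda>\<omega>. ind1 (lam j \<omega>)) = P.prob {\<omega> \<in> space M. lam j \<omega> = 1}"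
      unfolding ind1_def by (rule P.E_ind[OF rvL(1)[OF that]])
    also have "\<dots> = 1 - P.prob {\<omega> \<in> space M. lam j \<omega> = 0}"
      by (rule P.prob_one[OF rvL(1)[OF that]]) (use hvals that in auto)
    also have "\<dots> = 1 - gbar" using hdist[OF that] by simp
    finally show ?thesis .
  qed
  have Pe1: "P.expectation (\<lambda>\<omega>. ind1 (lame j \<omega>)) = 1 - ge" if "1 \<le> j" for j
  proof -
    have "P.expectation (\<lambda>\<omega>. ind1 (lame j \<omega>)) = P.prob {\<omega> \<in> space M. lame j \<omega> = 1}"
      unfolding ind1_def by (rule P.E_ind[OF rvE(1)[OF that]])
    also have "\<dots> = 1 - P.prob {\<omega> \<in> space M. lame j \<omega> = 0}"
      by (rule P.prob_one[OF rvE(1)[OF that]]) (use hvals that in auto)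
    also have "\<dots> = 1 - ge" using hdist[OF that] by simp
    finally show ?thesis .
  qed
  have Pu1: "P.expectation (\<lambda>\<omega>. ind1 (u j \<omega>)) = 1 - mu" if "1 \<le> j" for j
  proof -
    have "P.expectation (\<lambda>\<omega>. ind1 (u j \<omega>)) = P.prob {\<omega> \<in> space M. u j \<omega> = 1}"
      unfolding ind1_def by (rule P.E_ind[OF rvL(2)[OF that]])
    also have "\<dots> = 1 - P.prob {\<omega> \<in> space M. u j \<omega> = 0}"
      by (rule P.prob_one[OF rvL(2)[OF that]]) (use hvals that in auto)
    also have "\<dots> = 1 - mu" using hdist[OF that] by simp
    finally show ?thesis .
  qed
  have Pu0: "P.expectation (\<lambda>\<omega>. ind0 (u j \<omega>)) = mu" if "1 \<le> j" for j
  proof -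
    have "P.expectation (\<lambda>\<omega>. ind0 (u j \<omega>)) = P.prob {\<omega> \<in> space M. u j \<omega> = 0}"
      unfolding ind0_def by (rule P.E_ind[OF rvL(2)[OF that]])
    also have "\<dots> = mu" using hdist[OF that] by simp
    finally show ?thesis .
  qed
  define c1 :: "nat \<Rightarrow> nat \<Rightarrow> real" where "c1 = (\<lambda>a b. ind1 a * ind1 b)"
  define cz :: "nat \<Rightarrow> nat \<Rightarrow> real" where "cz = (\<lambda>a b. 0)"
  define c3 :: "nat \<Rightarrow> nat \<Rightarrow> real" where "c3 = (\<lambda>a b. 1 - ind1 a * ind1 b)"
  have bc1: "\<bar>c1 a b\<bar> \<le> 1" and bcz: "\<bar>cz a b\<bar> \<le> 1" and bc3: "\<bar>c3 a b\<bar> \<le> 1" for a b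
    by (simp_all add: c1_def cz_def c3_def ind1_def)
  have PLeq: "Pleg A Q Pbar P0 lam u k \<omega> = Zg (Phi c1 cz c3 Pbar 0 A Q) P0 lam u k \<omega>" for k \<omega>
    by (induction k) (simp_all add: Phi_def c1_def cz_def c3_def ind1_def)
  define p where "p = (1 - gbar) * (1 - mu)"
  have p: "0 < p" "p \<le> 1" using hgbar hmu unfolding p_def
    by (auto intro: mult_pos_pos mult_le_one)
  define E where "E = (\<lambda>k. P.expectation (Pleg A Q Pbar P0 lam u k))"
  have PLf: "Pleg A Q Pbar P0 lam u k = Zg (Phi c1 cz c3 Pbar 0 A Q) P0 lam u k" for k
    by (rule ext) (rule PLeq)
  have EZ: "E k = P.expectation (Zg (Phi c1 cz c3 Pbar 0 A Q) P0 lam u k)" for k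
    unfolding E_def PLf ..
  have Ec1: "P.expectation (\<lambda>\<omega>. c1 (lam j \<omega>) (u j \<omega>)) = p" if "1 \<le> j" for j
    unfolding c1_def p_def using P.E_prod[where p=ind1 and q=ind1, OF hindep that b1 b1] Pl1[OF that] Pu1[OF that] by simp
  have Ec3: "P.expectation (\<lambda>\<omega>. c3 (lam j \<omega>) (u j \<omega>)) = 1 - p" if "1 \<le> j" for j
  proof -
    have "P.expectation (\<lambda>\<omega>. c3 (lam j \<omega>) (u j \<omega>)) = 1 - P.expectation (\<lambda>\<omega>. c1 (lam j \<omega>) (u j \<omega>))"
      unfolding c3_def c1_def using P.E_one_minus[OF rvL(1)[OF that] rvL(2)[OF that], of "\<lambda>a b. ind1 a * ind1 b"]
      by (simp add: ind1_def)
    then show ?thesis using Ec1[OF that] by simp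
  qed
  have stepL: "E (Suc k) = p *\<^sub>R Pbar + 0 *\<^sub>R 0 + (1 - p) *\<^sub>R (A ** E k ** transpose A + Q)" for k
    unfolding EZ P.step_expect[OF hindep bc1 bcz bc3] Ec1[of "Suc k", simplified] Ec3[of "Suc k", simplified]
    by (simp add: cz_def)
  have limL: "E \<longlonglongrightarrow> Lyap (sqrt (1 - p) *\<^sub>R A) (p *\<^sub>R Pbar + 0 *\<^sub>R 0 + (1 - p) *\<^sub>R Q)"
    by (rule limit_from_step[where E=E and ea=p and Va=Pbar and eb=0 and Vb=0 and ec="1-p" and Q=Q, OF gA _ _ stepL]) (use p in auto)
  have trL: "trace (Lyap (sqrt (1-p) *\<^sub>R A) (p *\<^sub>R Pbar + (1-p) *\<^sub>R Q)) < trace (Lyap A Q)"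
    by (rule part1_ineq[OF gA hQ hR hobs hPbar(1) hPbar(2) p])
  define c2 :: "nat \<Rightarrow> nat \<Rightarrow> real" where "c2 = (\<lambda>a b. ind1 a * ind0 b)"
  define c12 :: "nat \<Rightarrow> nat \<Rightarrow> real" where "c12 = (\<lambda>a b. ind1 a * ind1 b + ind1 a * ind0 b)"
  define c3e :: "nat \<Rightarrow> nat \<Rightarrow> real" where "c3e = (\<lambda>a b. 1 - (ind1 a * ind1 b + ind1 a * ind0 b))"
  have bc2: "\<bar>c2 a b\<bar> \<le> 1" and bc12: "\<bar>c12 a b\<bar> \<le> 1" and bc3e: "\<bar>c3e a b\<bar> \<le> 1" for a b
    by (simp_all add: c2_def c12_def c3e_def ind1_def ind0_def)
  define Pn where "Pn = Lyap A Q + Pbar"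
  have PEeq: "Peav A Q Pbar Pn Pe0 lame u k \<omega> = Zg (Phi c1 c2 c3e Pbar Pn A Q) Pe0 lame u k \<omega>" for k \<omega>
    by (induction k) (simp_all add: Phi_def c1_def c2_def c3e_def ind1_def ind0_def)
  define Ee where "Ee = (\<lambda>k. P.expectation (Peav A Q Pbar Pn Pe0 lame u k))"
  have PEf: "Peav A Q Pbar Pn Pe0 lame u k = Zg (Phi c1 c2 c3e Pbar Pn A Q) Pe0 lame u k" for k
    by (rule ext) (rule PEeq)
  have EZe: "Ee k = P.expectation (Zg (Phi c1 c2 c3e Pbar Pn A Q) Pe0 lame u k)" for k
    unfolding Ee_def PEf ..
  have Ee1: "P.expectation (\<lambda>\<omega>. c1 (lame j \<omega>) (u j \<omega>)) = (1 - ge) * (1 - mu)" if "1 \<le> j" for j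
    unfolding c1_def using P.E_prod[where p=ind1 and q=ind1, OF hindep_e that b1 b1] Pe1[OF that] Pu1[OF that] by simp
  have Ee2: "P.expectation (\<lambda>\<omega>. c2 (lame j \<omega>) (u j \<omega>)) = (1 - ge) * mu" if "1 \<le> j" for j
    unfolding c2_def using P.E_prod[where p=ind1 and q=ind0, OF hindep_e that b1 b0] Pe1[OF that] Pu0[OF that] by simp
  have Ee3: "P.expectation (\<lambda>\<omega>. c3e (lame j \<omega>) (u j \<omega>)) = ge" if "1 \<le> j" for j
  proof -
    have "P.expectation (\<lambda>\<omega>. c3e (lame j \<omega>) (u j \<omega>)) = 1 - P.expectation (\<lambda>\<omega>. c12 (lame j \<omega>) (u j \<omega>))"
      unfolding c3e_def c12_def using P.E_one_minus[where c="\<lambda>a b. ind1 a * ind1 b + ind1 a * ind0 b", OF rvE(1)[OF that] rvE(2)[OF that] bc12[unfolded c12_def]]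
      by simp
    also have "P.expectation (\<lambda>\<omega>. c12 (lame j \<omega>) (u j \<omega>))
        = P.expectation (\<lambda>\<omega>. c1 (lame j \<omega>) (u j \<omega>)) + P.expectation (\<lambda>\<omega>. c2 (lame j \<omega>) (u j \<omega>))"
      unfolding c12_def c1_def c2_def
      by (rule P.E_add2[where c="\<lambda>a b. ind1 a * ind1 b" and d="\<lambda>a b. ind1 a * ind0 b", OF rvE(1)[OF that] rvE(2)[OF that] bc1[unfolded c1_def] bc2[unfolded c2_def]])
    finally show ?thesis using Ee1[OF that] Ee2[OF that] by (simp add: algebra_simps)
  qed
  have stepE: "Ee (Suc k) = ((1 - ge) * (1 - mu)) *\<^sub>R Pbar + ((1 - ge) * mu) *\<^sub>R Pn + ge *\<^sub>R (A ** Ee k ** transpose A + Q)" for k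
    unfolding EZe P.step_expect[OF hindep_e bc1 bc2 bc3e] Ee1[of "Suc k", simplified] Ee2[of "Suc k", simplified]
      Ee3[of "Suc k", simplified] ..
  have limE: "Ee \<longlonglongrightarrow> Lyap (sqrt ge *\<^sub>R A) (((1 - ge) * (1 - mu)) *\<^sub>R Pbar + ((1 - ge) * mu) *\<^sub>R Pn + ge *\<^sub>R Q)"
    by (rule limit_from_step[where E=Ee and ea="(1 - ge) * (1 - mu)" and Va=Pbar and eb="(1 - ge) * mu" and Vb=Pn and ec=ge and Q=Q, OF gA _ _ stepE]) (use hge in auto)
  have trE: "trace (Lyap A Q) < trace (Lyap (sqrt ge *\<^sub>R A)
            (((1-ge)*(1-mu)) *\<^sub>R Pbar + ((1-ge)*mu) *\<^sub>R (Lyap A Q + Pbar) + ge *\<^sub>R Q))"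
    by (rule part2_ineq[OF gA hQ hge hmu(1) hmuop])
  show ?thesis
  proof (intro conjI exI)
    show "(\<lambda>k. P.expectation (Pleg A Q Pbar P0 lam u k)) \<longlonglongrightarrow> Lyap (sqrt (1 - p) *\<^sub>R A) (p *\<^sub>R Pbar + 0 *\<^sub>R 0 + (1 - p) *\<^sub>R Q)"
      using limL unfolding E_def .
    show "trace (Lyap (sqrt (1 - p) *\<^sub>R A) (p *\<^sub>R Pbar + 0 *\<^sub>R 0 + (1 - p) *\<^sub>R Q)) < trace (Lyap A Q)"
      using trL by simp
    show "(\<lambda>k. P.expectation (Peav A Q Pbar (Lyap A Q + Pbar) Pe0 lame u k)) \<longlonglongrightarrow>
        Lyap (sqrt ge *\<^sub>R A) (((1 - ge) * (1 - mu)) *\<^sub>R Pbar + ((1 - ge) * mu) *\<^sub>R Pn + ge *\<^sub>R Q)"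
      using limE unfolding Ee_def Pn_def .
    show "trace (Lyap A Q) < trace (Lyap (sqrt ge *\<^sub>R A) (((1 - ge) * (1 - mu)) *\<^sub>R Pbar + ((1 - ge) * mu) *\<^sub>R Pn + ge *\<^sub>R Q))"
      using trE unfolding Pn_def .
  qed
qed


end
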